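(* Let $(S_n^{(1)},S_n^{(2)})_{n\ge0}$ be a two-elephant walking model with $\alpha_1\alpha_2\ne0$ and $\lambda_\alpha\ne\pm1$. Then almost surely $\lim_{n\to\infty}x_n=\lim_{n\to\infty}y_n=0$, and consequently $\lim_{n\to\infty}S_n^{(1)}/n=\lim_{n\to\infty}S_n^{(2)}/n=0$ almost surely. Moreover, almost surely, $$\lim_{j\to\infty}(1+\lambda_\alpha)^2\,\mathbb E\big((\varepsilon^{(x)}_{j+1})^2\mid\mathcal F_j\big)=\lim_{j\to\infty}(1-\lambda_\alpha)^2\,\mathbb E\big((\varepsilon^{(y)}_{j+1})^2\mid\mathcal F_j\big)=1+\frac{\alpha_1}{\alpha_2},$$ and $$\lim_{j\to\infty}(1-\alpha_1\alpha_2)\,\mathbb E\big(\varepsilon^{(x)}_{j+1}\varepsilon^{(y)}_{j+1}\mid\mathcal F_j\big)=1-\frac{\alpha_1}{\alpha_2}.$$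
   Context: Two-elephant walking model: fix $p_1,p_2\in[0,1]$, $\alpha_i=2p_i-1$. Let $(\xi_n^{(1)})_{n\ge2}$ be i.i.d. Bernoulli($p_1$), $(\xi_n^{(2)})_{n\ge2}$ i.i.d. Bernoulli($p_2$), $(u_n^{(1)})_{n\ge1}$, $(u_n^{(2)})_{n\ge1}$ independent with $u_n^{(i)}$ uniform on $\{1,\dots,n\}$, all mutually independent. $S_0^{(i)}=0$, $X_1^{(1)},X_1^{(2)}\in\{-1,1\}$ given, and for $n\ge1$: $X_{n+1}^{(1)}:=(2\xi^{(1)}_{n+1}-1)X^{(2)}_{u_n^{(2)}}$, $X_{n+1}^{(2)}:=(2\xi^{(2)}_{n+1}-1)X^{(1)}_{u_n^{(1)}}$, $S_n^{(i)}=\sum_{k\le n}X_k^{(i)}$; $\mathcal F_n:=\sigma(X_j^{(i)}:1\le j\le n,\ i=1,2)$. Notation: $\lambda_\alpha:=\operatorname{sgn}(\alpha_2)\sqrt{\alpha_1\alpha_2}$ if $\alpha_1\alpha_2>0$, $\lambda_\alpha:=\mathrm i\operatorname{sgn}(\alpha_2)\sqrt{-\alpha_1\alpha_2}$ if $\alpha_1\alpha_2<0$; $r_\alpha:=\sqrt{\alpha_1/\alpha_2}$ if $\alpha_1\alpha_2>0$, $r_\alpha:=\mathrm i\sqrt{-\alpha_1/\alpha_2}$ if $\alpha_1\alpha_2<0$. $x_n:=\frac{S_n^{(1)}-r_\alpha S_n^{(2)}}{n}$, $y_n:=\frac{S_n^{(1)}+r_\alpha S_n^{(2)}}{n}$,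 and for $j\ge1$ $$\varepsilon^{(x)}_{j+1}:=\frac{1}{1+\lambda_\alpha}\big(X^{(1)}_{j+1}-r_\alpha X^{(2)}_{j+1}+\lambda_\alpha x_j\big),\qquad \varepsilon^{(y)}_{j+1}:=\frac{1}{1-\lambda_\alpha}\big(X^{(1)}_{j+1}+r_\alpha X^{(2)}_{j+1}-\lambda_\alpha y_j\big).$$ (Squares of possibly complex quantities are ordinary squares, not squared moduli.) *)

theory Defs
  imports "HOL-Probability.Probability"
begin

text \<open>The list
  ew_hist a b xi1 xi2 v1 v2 m contains the pairs (X^(1)_k, X^(2)_k) for k = 1..m+1,
  given the initial steps a, b and the sample paths of xi^(1), xi^(2) (values in {0,1})
  and u^(1), u^(2) (values in {1..n}).\<close>

primrec ew_hist :: "int \<Rightarrow> int \<Rightarrow> (nat \<Rightarrow> nat) \<Rightarrow> (nat \<Rightarrow> nat) \<Rightarrow> (nat \<Rightarrow> nat) \<Rightarrow> (nat \<Rightarrow> nat)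
    \<Rightarrow> nat \<Rightarrow> (int \<times> int) list" where
  "ew_hist a b xi1 xi2 v1 v2 0 = [(a, b)]"
| "ew_hist a b xi1 xi2 v1 v2 (Suc m) =
     (let h = ew_hist a b xi1 xi2 v1 v2 m
      in h @ [((2 * int (xi1 (m + 2)) - 1) * snd (h ! (v2 (m + 1) - 1)),
               (2 * int (xi2 (m + 2)) - 1) * fst (h ! (v1 (m + 1) - 1)))])"

definition ew_step :: "int \<Rightarrow> int \<Rightarrow> (nat \<Rightarrow> nat) \<Rightarrow> (nat \<Rightarrow> nat) \<Rightarrow> (nat \<Rightarrow> nat) \<Rightarrow> (nat \<Rightarrow> nat)
    \<Rightarrow> nat \<Rightarrow> int \<times> int" where
  "ew_step a b xi1 xi2 v1 v2 k = ew_hist a b xi1 xi2 v1 v2 (k - 1) ! (k - 1)"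

datatype ew_idx = Xi1 nat | Xi2 nat | U1 nat | U2 nat

fun ew_family :: "(nat \<Rightarrow> 'a \<Rightarrow> nat) \<Rightarrow> (nat \<Rightarrow> 'a \<Rightarrow> nat) \<Rightarrow> (nat \<Rightarrow> 'a \<Rightarrow> nat) \<Rightarrow> (nat \<Rightarrow> 'a \<Rightarrow> nat)
    \<Rightarrow> ew_idx \<Rightarrow> 'a \<Rightarrow> nat" where
  "ew_family xi1 xi2 u1 u2 (Xi1 n) = xi1 n"
| "ew_family xi1 xi2 u1 u2 (Xi2 n) = xi2 n"
| "ew_family xi1 xi2 u1 u2 (U1 n) = u1 n"
| "ew_family xi1 xi2 u1 u2 (U2 n) = u2 n"

definition ew_index :: "ew_idx set" where
  "ew_index = {Xi1 n | n. 2 \<le> n} \<union> {Xi2 n | n. 2 \<le> n} \<union> {U1 n | n. 1 \<le> n} \<union> {U2 n | n. 1 \<le> n}"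

text \<open>lambda_alpha and r_alpha (only used when a1*a2 \<noteq> 0).\<close>
definition lam_alpha :: "real \<Rightarrow> real \<Rightarrow> complex" where
  "lam_alpha a1 a2 = (if a1 * a2 > 0 then complex_of_real (sgn a2 * sqrt (a1 * a2))
                      else \<i> * complex_of_real (sgn a2 * sqrt (- (a1 * a2))))"

definition r_alpha :: "real \<Rightarrow> real \<Rightarrow> complex" where
  "r_alpha a1 a2 = (if a1 * a2 > 0 then complex_of_real (sqrt (a1 / a2))
                    else \<i> * complex_of_real (sqrt (- (a1 / a2))))"

definition cplx_cond_exp :: "'a measure \<Rightarrow> 'a measure \<Rightarrow> ('a \<Rightarrow> complex) \<Rightarrow> 'a \<Rightarrow> complex" where
  "cplx_cond_exp M F f = (\<lambda>\<omega>. Complex (real_cond_exp M F (\<lambda>\<omega>. Re (f \<omega>)) \<omega>)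
                                     (real_cond_exp M F (\<lambda>\<omega>. Im (f \<omega>)) \<omega>))"

end

theory Submission
  imports Defs
begin

lemma ew_hist_length[simp]: "length (ew_hist a b xi1 xi2 v1 v2 m) = Suc m"
  by (induction m) (simp_all add: Let_def)

lemma ew_hist_prefix: "j \<le> m \<Longrightarrow> ew_hist a b xi1 xi2 v1 v2 m ! j = ew_hist a b xi1 xi2 v1 v2 j ! j"
proof (induction m)
  case 0 then show ?case by simp
next
  case (Suc m)
  show ?case
  proof (cases "j = Suc m")
    case False
    then have "j \<le> m" using Suc by simp
    then show ?thesis using Suc by (simp add: Let_def nth_append)
  qed simp
qed

lemma ew_step_nth: "1 \<le> k \<Longrightarrow> k \<le> Suc m \<Longrightarrow> ew_hist a b xi1 xi2 v1 v2 m ! (k - 1) = ew_step a b xi1 xi2 v1 v2 k"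
  unfolding ew_step_def by (rule ew_hist_prefix) simp

lemma ew_step_1[simp]: "ew_step a b xi1 xi2 v1 v2 1 = (a, b)"
  unfolding ew_step_def by simp

lemma ew_step_Suc:
  assumes "1 \<le> n"
  shows "ew_step a b xi1 xi2 v1 v2 (Suc n) =
     ((2 * int (xi1 (n + 1)) - 1) * snd (ew_hist a b xi1 xi2 v1 v2 (n - 1) ! (v2 n - 1)),
      (2 * int (xi2 (n + 1)) - 1) * fst (ew_hist a b xi1 xi2 v1 v2 (n - 1) ! (v1 n - 1)))"
proof -
  obtain m where m: "n = Suc m" using assms by (cases n) auto
  show ?thesis unfolding ew_step_def m by (simp add: Let_def nth_append)
qed

lemma ew_step_Suc':
  assumes "1 \<le> n" "v1 n \<in> {1..n}" "v2 n \<in> {1..n}"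
  shows "ew_step a b xi1 xi2 v1 v2 (Suc n) =
     ((2 * int (xi1 (n + 1)) - 1) * snd (ew_step a b xi1 xi2 v1 v2 (v2 n)),
      (2 * int (xi2 (n + 1)) - 1) * fst (ew_step a b xi1 xi2 v1 v2 (v1 n)))"
  unfolding ew_step_Suc[OF assms(1)] using assms
  by (subst (1 2) ew_step_nth[symmetric]) auto

lemma ew_hist_pm1:
  assumes "a \<in> {-1,1}" "b \<in> {-1,1}"
    and "\<And>k. 2 \<le> k \<Longrightarrow> k \<le> Suc m \<Longrightarrow> xi1 k \<in> {0,1} \<and> xi2 k \<in> {0,1}"
    and "\<And>k. 1 \<le> k \<Longrightarrow> k \<le> m \<Longrightarrow> v1 k \<in> {1..k} \<and> v2 k \<in> {1..k}"
  shows "\<forall>p \<in> set (ew_hist a b xi1 xi2 v1 v2 m). fst p \<in> {-1,1} \<and> snd p \<in> {-1,1}"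
  using assms(3,4)
proof (induction m)
  case 0 then show ?case using assms(1,2) by simp
next
  case (Suc m)
  let ?h = "ew_hist a b xi1 xi2 v1 v2 m"
  have IH: "\<forall>p \<in> set ?h. fst p \<in> {-1,1} \<and> snd p \<in> {-1,1}"
    using Suc.IH Suc.prems by simp
  have x: "xi1 (m+2) \<in> {0,1}" "xi2 (m+2) \<in> {0,1}" using Suc.prems(1)[of "m+2"] by auto
  have v: "v1 (m+1) \<in> {1..m+1}" "v2 (m+1) \<in> {1..m+1}" using Suc.prems(2)[of "m+1"] by auto
  have i1: "?h ! (v1 (m+1) - 1) \<in> set ?h" using v by (intro nth_mem) auto
  have i2: "?h ! (v2 (m+1) - 1) \<in> set ?h" using v by (intro nth_mem) auto
  have "snd (?h ! (v2 (m+1) - 1)) \<in> {-1,1}" "fst (?h ! (v1 (m+1) - 1)) \<in> {-1,1}"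
    using IH i1 i2 by auto
  then show ?case using IH x by (auto simp: Let_def)
qed

lemma ew_step_pm1:
  assumes "a \<in> {-1,1}" "b \<in> {-1,1}"
    and "\<And>k. 2 \<le> k \<Longrightarrow> xi1 k \<in> {0,1} \<and> xi2 k \<in> {0,1}"
    and "\<And>k. 1 \<le> k \<Longrightarrow> v1 k \<in> {1..k} \<and> v2 k \<in> {1..k}"
  shows "fst (ew_step a b xi1 xi2 v1 v2 k) \<in> {-1,1} \<and> snd (ew_step a b xi1 xi2 v1 v2 k) \<in> {-1,1}"
proof -
  have "ew_step a b xi1 xi2 v1 v2 k \<in> set (ew_hist a b xi1 xi2 v1 v2 (k-1))"
    unfolding ew_step_def by (intro nth_mem) simp
  moreover have "\<forall>p \<in> set (ew_hist a b xi1 xi2 v1 v2 (k-1)). fst p \<in> {-1,1} \<and> snd p \<in> {-1,1}"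
    by (rule ew_hist_pm1) (use assms in auto)
  ultimately show ?thesis by blast
qed

lemma hist_meas:
  fixes N :: "'a measure"
  assumes "\<And>k. 2 \<le> k \<Longrightarrow> k \<le> Suc m \<Longrightarrow> xi1 k \<in> N \<rightarrow>\<^sub>M count_space UNIV \<and> xi2 k \<in> N \<rightarrow>\<^sub>M count_space UNIV"
    and "\<And>k. 1 \<le> k \<Longrightarrow> k \<le> m \<Longrightarrow> u1 k \<in> N \<rightarrow>\<^sub>M count_space UNIV \<and> u2 k \<in> N \<rightarrow>\<^sub>M count_space UNIV"
  shows "(\<lambda>\<omega>. ew_hist a b (\<lambda>n. xi1 n \<omega>) (\<lambda>n. xi2 n \<omega>) (\<lambda>n. u1 n \<omega>) (\<lambda>n. u2 n \<omega>) m) \<in> N \<rightarrow>\<^sub>M count_space UNIV"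
  using assms
proof (induction m)
  case 0 then show ?case by simp
next
  case (Suc m)
  have IH: "(\<lambda>\<omega>. ew_hist a b (\<lambda>n. xi1 n \<omega>) (\<lambda>n. xi2 n \<omega>) (\<lambda>n. u1 n \<omega>) (\<lambda>n. u2 n \<omega>) m) \<in> N \<rightarrow>\<^sub>M count_space UNIV"
    using Suc by simp
  have m1: "xi1 (m+2) \<in> N \<rightarrow>\<^sub>M count_space UNIV" "xi2 (m+2) \<in> N \<rightarrow>\<^sub>M count_space UNIV"
    using Suc.prems(1)[of "m+2"] by auto
  have m2: "u1 (m+1) \<in> N \<rightarrow>\<^sub>M count_space UNIV" "u2 (m+1) \<in> N \<rightarrow>\<^sub>M count_space UNIV"
    using Suc.prems(2)[of "m+1"] by auto
  define f where "f = (\<lambda>(h::(int\<times>int) list) (c1::nat) (c2::nat) (d1::nat) (d2::nat).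
      h @ [((2 * int c1 - 1) * snd (h ! (d2 - 1)), (2 * int c2 - 1) * fst (h ! (d1 - 1)))])"
  have *: "(\<lambda>\<omega>. f (ew_hist a b (\<lambda>n. xi1 n \<omega>) (\<lambda>n. xi2 n \<omega>) (\<lambda>n. u1 n \<omega>) (\<lambda>n. u2 n \<omega>) m)
            (xi1 (m+2) \<omega>) (xi2 (m+2) \<omega>) (u1 (m+1) \<omega>) (u2 (m+1) \<omega>)) \<in> N \<rightarrow>\<^sub>M count_space UNIV"
    apply (rule measurable_compose_countable[where f="\<lambda>h \<omega>. f h (xi1 (m+2) \<omega>) (xi2 (m+2) \<omega>) (u1 (m+1) \<omega>) (u2 (m+1) \<omega>)", OF _ IH])
    apply (rule measurable_compose_countable[where f="\<lambda>c \<omega>. f h c (xi2 (m+2) \<omega>) (u1 (m+1) \<omega>) (u2 (m+1) \<omega>)" for h, OF _ m1(1)])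
    apply (rule measurable_compose_countable[where f="\<lambda>c2 \<omega>. f h c c2 (u1 (m+1) \<omega>) (u2 (m+1) \<omega>)" for h c, OF _ m1(2)])
    apply (rule measurable_compose_countable[where f="\<lambda>d \<omega>. f h c c2 d (u2 (m+1) \<omega>)" for h c c2, OF _ m2(1)])
    apply (rule measurable_compose_countable[where f="\<lambda>d2 \<omega>. f h c c2 d d2" for h c c2 d, OF _ m2(2)])
    by (rule measurable_count_space_const)
  have eq: "(\<lambda>\<omega>. ew_hist a b (\<lambda>n. xi1 n \<omega>) (\<lambda>n. xi2 n \<omega>) (\<lambda>n. u1 n \<omega>) (\<lambda>n. u2 n \<omega>) (Suc m)) =
     (\<lambda>\<omega>. f (ew_hist a b (\<lambda>n. xi1 n \<omega>) (\<lambda>n. xi2 n \<omega>) (\<lambda>n. u1 n \<omega>) (\<lambda>n. u2 n \<omega>) m)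
            (xi1 (m+2) \<omega>) (xi2 (m+2) \<omega>) (u1 (m+1) \<omega>) (u2 (m+1) \<omega>))"
    unfolding f_def by (simp only: ew_hist.simps Let_def)
  show ?case unfolding eq by (rule *)
qed

lemma step_meas:
  fixes N :: "'a measure"
  assumes "\<And>k. 2 \<le> k \<Longrightarrow> k \<le> n \<Longrightarrow> xi1 k \<in> N \<rightarrow>\<^sub>M count_space UNIV \<and> xi2 k \<in> N \<rightarrow>\<^sub>M count_space UNIV"
    and "\<And>k. 1 \<le> k \<Longrightarrow> k < n \<Longrightarrow> u1 k \<in> N \<rightarrow>\<^sub>M count_space UNIV \<and> u2 k \<in> N \<rightarrow>\<^sub>M count_space UNIV"
    and "k \<le> n"
  shows "(\<lambda>\<omega>. ew_step a b (\<lambda>n. xi1 n \<omega>) (\<lambda>n. xi2 n \<omega>) (\<lambda>n. u1 n \<omega>) (\<lambda>n. u2 n \<omega>) k) \<in> N \<rightarrow>\<^sub>M count_space UNIV"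
proof -
  have "(\<lambda>\<omega>. ew_hist a b (\<lambda>n. xi1 n \<omega>) (\<lambda>n. xi2 n \<omega>) (\<lambda>n. u1 n \<omega>) (\<lambda>n. u2 n \<omega>) (k-1)) \<in> N \<rightarrow>\<^sub>M count_space UNIV"
    by (rule hist_meas) (use assms in auto)
  then show ?thesis unfolding ew_step_def by simp
qed

locale ew = prob_space M for M :: "'a measure" +
  fixes p1 p2 :: real and a b :: int and xi1 xi2 u1 u2 :: "nat \<Rightarrow> 'a \<Rightarrow> nat"
  assumes p1: "p1 \<in> {0..1}" and p2: "p2 \<in> {0..1}"
    and ab: "a \<in> {-1, 1}" "b \<in> {-1, 1}"
    and indep: "indep_vars (\<lambda>_. count_space UNIV) (ew_family xi1 xi2 u1 u2) ew_index"
    and xi1_distr: "\<forall>n\<ge>2. distr M (count_space UNIV) (xi1 n) = measure_pmf (map_pmf of_bool (bernoulli_pmf p1))"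
    and xi2_distr: "\<forall>n\<ge>2. distr M (count_space UNIV) (xi2 n) = measure_pmf (map_pmf of_bool (bernoulli_pmf p2))"
    and u1_distr: "\<forall>n\<ge>1. distr M (count_space UNIV) (u1 n) = measure_pmf (pmf_of_set {1..n})"
    and u2_distr: "\<forall>n\<ge>1. distr M (count_space UNIV) (u2 n) = measure_pmf (pmf_of_set {1..n})"
begin

definition "X1 = (\<lambda>k \<omega>. real_of_int (fst (ew_step a b (\<lambda>n. xi1 n \<omega>) (\<lambda>n. xi2 n \<omega>) (\<lambda>n. u1 n \<omega>) (\<lambda>n. u2 n \<omega>) k)))"
definition "X2 = (\<lambda>k \<omega>. real_of_int (snd (ew_step a b (\<lambda>n. xi1 n \<omega>) (\<lambda>n. xi2 n \<omega>) (\<lambda>n. u1 n \<omega>) (\<lambda>n. u2 n \<omega>) k)))"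
definition "S1 = (\<lambda>n \<omega>. \<Sum>k\<in>{1..n}. X1 k \<omega>)"
definition "S2 = (\<lambda>n \<omega>. \<Sum>k\<in>{1..n}. X2 k \<omega>)"
definition "FF = (\<lambda>n. sigma (space M)
                 ({X1 k -` A \<inter> space M | k A. k \<in> {1..n} \<and> A \<in> sets borel} \<union>
                  {X2 k -` A \<inter> space M | k A. k \<in> {1..n} \<and> A \<in> sets borel}))"
definition "fam \<omega> = (\<lambda>i. ew_family xi1 xi2 u1 u2 i \<omega>)"
definition "Dn n = {Xi1 k | k. 2 \<le> k \<and> k \<le> n} \<union> {Xi2 k | k. 2 \<le> k \<and> k \<le> n}
    \<union> {U1 k | k. 1 \<le> k \<and> k < n} \<union> {U2 k | k. 1 \<le> k \<and> k < n}"
definition "VA I = vimage_algebra (space M) (\<lambda>\<omega>. restrict (fam \<omega>) I) (PiM I (\<lambda>_. count_space UNIV))"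

lemma Dn_sub: "Dn n \<subseteq> ew_index"
  unfolding Dn_def ew_index_def by auto

lemma fam_meas_M: "i \<in> ew_index \<Longrightarrow> (\<lambda>\<omega>. fam \<omega> i) \<in> M \<rightarrow>\<^sub>M count_space UNIV"
  using indep unfolding indep_vars_def fam_def by auto

lemma xi_meas_M:
  "2 \<le> k \<Longrightarrow> xi1 k \<in> M \<rightarrow>\<^sub>M count_space UNIV"
  "2 \<le> k \<Longrightarrow> xi2 k \<in> M \<rightarrow>\<^sub>M count_space UNIV"
  "1 \<le> k \<Longrightarrow> u1 k \<in> M \<rightarrow>\<^sub>M count_space UNIV"
  "1 \<le> k \<Longrightarrow> u2 k \<in> M \<rightarrow>\<^sub>M count_space UNIV"
  using fam_meas_M[of "Xi1 k"] fam_meas_M[of "Xi2 k"] fam_meas_M[of "U1 k"] fam_meas_M[of "U2 k"]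
  by (auto simp: fam_def ew_index_def)

lemma restrict_meas: "I \<subseteq> ew_index \<Longrightarrow> (\<lambda>\<omega>. restrict (fam \<omega>) I) \<in> M \<rightarrow>\<^sub>M PiM I (\<lambda>_. count_space UNIV)"
  by (rule measurable_restrict) (use fam_meas_M in auto)

lemma space_VA[simp]: "space (VA I) = space M"
  unfolding VA_def by simp

lemma sets_VA: "I \<subseteq> ew_index \<Longrightarrow> sets (VA I) \<subseteq> sets M"
  unfolding VA_def by (rule sets_image_in_sets[OF refl restrict_meas])

lemma subalg_VA: "I \<subseteq> ew_index \<Longrightarrow> subalgebra M (VA I)"
  unfolding subalgebra_def using sets_VA by simp

lemma VA_meas_M: "I \<subseteq> ew_index \<Longrightarrow> f \<in> VA I \<rightarrow>\<^sub>M N \<Longrightarrow> f \<in> M \<rightarrow>\<^sub>M N"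
  by (rule measurable_from_subalg[OF subalg_VA])

lemma fam_meas_VA: "i \<in> I \<Longrightarrow> (\<lambda>\<omega>. fam \<omega> i) \<in> VA I \<rightarrow>\<^sub>M count_space UNIV"
proof -
  assume i: "i \<in> I"
  have "(\<lambda>\<omega>. restrict (fam \<omega>) I) \<in> VA I \<rightarrow>\<^sub>M PiM I (\<lambda>_. count_space UNIV)"
    unfolding VA_def by (rule measurable_vimage_algebra1) (auto simp: space_PiM)
  from measurable_compose[OF this measurable_component_singleton[OF i]]
  show ?thesis using i by simp
qed

lemma xi_meas_VA:
  "Xi1 k \<in> I \<Longrightarrow> xi1 k \<in> VA I \<rightarrow>\<^sub>M count_space UNIV"
  "Xi2 k \<in> I \<Longrightarrow> xi2 k \<in> VA I \<rightarrow>\<^sub>M count_space UNIV"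
  "U1 k \<in> I \<Longrightarrow> u1 k \<in> VA I \<rightarrow>\<^sub>M count_space UNIV"
  "U2 k \<in> I \<Longrightarrow> u2 k \<in> VA I \<rightarrow>\<^sub>M count_space UNIV"
  using fam_meas_VA[of "Xi1 k" I] fam_meas_VA[of "Xi2 k" I] fam_meas_VA[of "U1 k" I] fam_meas_VA[of "U2 k" I]
  by (auto simp: fam_def)

lemma step_meas_M: "(\<lambda>\<omega>. ew_step a b (\<lambda>n. xi1 n \<omega>) (\<lambda>n. xi2 n \<omega>) (\<lambda>n. u1 n \<omega>) (\<lambda>n. u2 n \<omega>) k) \<in> M \<rightarrow>\<^sub>M count_space UNIV"
  by (rule step_meas[where n=k]) (auto intro: xi_meas_M)

lemma step_meas_VA: "Dn n \<subseteq> I \<Longrightarrow> k \<le> n \<Longrightarrow>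
   (\<lambda>\<omega>. ew_step a b (\<lambda>n. xi1 n \<omega>) (\<lambda>n. xi2 n \<omega>) (\<lambda>n. u1 n \<omega>) (\<lambda>n. u2 n \<omega>) k) \<in> VA I \<rightarrow>\<^sub>M count_space UNIV"
  by (rule step_meas[where n=n]) (auto intro!: xi_meas_VA simp: Dn_def)

lemma X_meas_M[measurable]: "X1 k \<in> borel_measurable M" "X2 k \<in> borel_measurable M"
  unfolding X1_def X2_def
  by (rule measurable_compose[OF step_meas_M], simp)+

lemma X_meas_VA: "Dn n \<subseteq> I \<Longrightarrow> k \<le> n \<Longrightarrow> X1 k \<in> borel_measurable (VA I)"
  "Dn n \<subseteq> I \<Longrightarrow> k \<le> n \<Longrightarrow> X2 k \<in> borel_measurable (VA I)"
  unfolding X1_def X2_def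
  by (rule measurable_compose[OF step_meas_VA], simp_all)+

lemma S_meas_M[measurable]: "S1 n \<in> borel_measurable M" "S2 n \<in> borel_measurable M"
  unfolding S1_def S2_def by measurable

lemma S_meas_VA: "Dn n \<subseteq> I \<Longrightarrow> S1 n \<in> borel_measurable (VA I)" "Dn n \<subseteq> I \<Longrightarrow> S2 n \<in> borel_measurable (VA I)"
  unfolding S1_def S2_def
  by (rule borel_measurable_sum; rule X_meas_VA; auto)+

lemma indep_VA:
  assumes "I \<subseteq> ew_index" "J \<subseteq> ew_index" "I \<inter> J = {}"
    and Z: "Z \<in> borel_measurable (VA I)" and W: "W \<in> borel_measurable (VA J)"
  shows "indep_var borel Z borel W"
proof -
  have iv: "indep_var (PiM I (\<lambda>_. count_space UNIV)) (\<lambda>\<omega>. restrict (fam \<omega>) I)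
                      (PiM J (\<lambda>_. count_space UNIV)) (\<lambda>\<omega>. restrict (fam \<omega>) J)"
    using indep_var_restrict[OF indep assms(3,1,2)] unfolding fam_def .
  then have is1: "indep_set (sets (VA I)) (sets (VA J))"
    unfolding indep_var_eq VA_def sets_vimage_algebra by simp
  have sub: "sigma_sets (space M) {Z -` A \<inter> space M |A. A \<in> sets borel} \<subseteq> sets (VA I)"
    if "Z \<in> borel_measurable (VA I)" for Z I
  proof -
    have "{Z -` A \<inter> space M |A. A \<in> sets borel} \<subseteq> sets (VA I)"
      using measurable_sets[OF that] by auto
    then show ?thesis using sets.sigma_sets_subset[of _ "VA I"] by simp
  qed
  show ?thesis
    unfolding indep_var_eq
  proof (intro conjI)
    show "random_variable borel Z" by (rule VA_meas_M[OF assms(1) Z])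
    show "random_variable borel W" by (rule VA_meas_M[OF assms(2) W])
    show "indep_set (sigma_sets (space M) {Z -` A \<inter> space M |A. A \<in> sets borel})
     (sigma_sets (space M) {W -` A \<inter> space M |A. A \<in> sets borel})"
      unfolding indep_set_def
      by (rule indep_sets_mono_sets[OF is1[unfolded indep_set_def]]) (use sub[OF Z] sub[OF W] in \<open>auto split: bool.split\<close>)
  qed
qed

end

context ew begin

definition "good \<omega> \<longleftrightarrow> (\<forall>k. (2 \<le> k \<longrightarrow> xi1 k \<omega> \<in> {0,1} \<and> xi2 k \<omega> \<in> {0,1}) \<and>
                           (1 \<le> k \<longrightarrow> u1 k \<omega> \<in> {1..k} \<and> u2 k \<omega> \<in> {1..k}))"

lemma AE_good: "AE \<omega> in M. good \<omega>"
proof -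
  have "AE \<omega> in M. (2 \<le> k \<longrightarrow> xi1 k \<omega> \<in> {0,1} \<and> xi2 k \<omega> \<in> {0,1}) \<and>
                           (1 \<le> k \<longrightarrow> u1 k \<omega> \<in> {1..k} \<and> u2 k \<omega> \<in> {1..k})" for k
  proof -
    have A: "AE \<omega> in M. xi1 k \<omega> \<in> {0,1}" if "2 \<le> k"
    proof (rule AE_distrD[OF xi_meas_M(1)[OF that]])
      show "AE z in distr M (count_space UNIV) (xi1 k). z \<in> {0, 1}"
        unfolding xi1_distr[rule_format, OF that] by (simp add: AE_measure_pmf_iff)
    qed
    have B: "AE \<omega> in M. xi2 k \<omega> \<in> {0,1}" if "2 \<le> k"
    proof (rule AE_distrD[OF xi_meas_M(2)[OF that]])
      show "AE z in distr M (count_space UNIV) (xi2 k). z \<in> {0, 1}"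
        unfolding xi2_distr[rule_format, OF that] by (simp add: AE_measure_pmf_iff)
    qed
    have C: "AE \<omega> in M. u1 k \<omega> \<in> {1..k}" if "1 \<le> k"
    proof (rule AE_distrD[OF xi_meas_M(3)[OF that]])
      show "AE z in distr M (count_space UNIV) (u1 k). z \<in> {1..k}"
        unfolding u1_distr[rule_format, OF that] using that by (simp add: AE_measure_pmf_iff)
    qed
    have D: "AE \<omega> in M. u2 k \<omega> \<in> {1..k}" if "1 \<le> k"
    proof (rule AE_distrD[OF xi_meas_M(4)[OF that]])
      show "AE z in distr M (count_space UNIV) (u2 k). z \<in> {1..k}"
        unfolding u2_distr[rule_format, OF that] using that by (simp add: AE_measure_pmf_iff)
    qed
    show ?thesis
    proof (cases "2 \<le> k")
      case True
      then have k1: "1 \<le> k" by simp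
      from A[OF True] B[OF True] C[OF k1] D[OF k1] show ?thesis
        by eventually_elim (use True in auto)
    next
      case False
      show ?thesis
      proof (cases "1 \<le> k")
        case True
        from C[OF True] D[OF True] show ?thesis
          by eventually_elim (use False in auto)
      qed (use False in auto)
    qed
  qed
  then show ?thesis unfolding good_def by (simp add: AE_all_countable)
qed

lemma good_X: "good \<omega> \<Longrightarrow> X1 k \<omega> \<in> {-1,1} \<and> X2 k \<omega> \<in> {-1,1}"
proof -
  assume g: "good \<omega>"
  have "fst (ew_step a b (\<lambda>n. xi1 n \<omega>) (\<lambda>n. xi2 n \<omega>) (\<lambda>n. u1 n \<omega>) (\<lambda>n. u2 n \<omega>) k) \<in> {-1,1} \<and>
        snd (ew_step a b (\<lambda>n. xi1 n \<omega>) (\<lambda>n. xi2 n \<omega>) (\<lambda>n. u1 n \<omega>) (\<lambda>n. u2 n \<omega>) k) \<in> {-1,1}"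
    by (rule ew_step_pm1[OF ab]) (use g in \<open>auto simp: good_def\<close>)
  then show ?thesis unfolding X1_def X2_def by auto
qed

lemma good_Xsq: "good \<omega> \<Longrightarrow> (X1 k \<omega>)\<^sup>2 = 1" "good \<omega> \<Longrightarrow> (X2 k \<omega>)\<^sup>2 = 1"
  using good_X[of \<omega> k] by auto

lemma good_Xabs: "good \<omega> \<Longrightarrow> \<bar>X1 k \<omega>\<bar> \<le> 1" "good \<omega> \<Longrightarrow> \<bar>X2 k \<omega>\<bar> \<le> 1"
  using good_X[of \<omega> k] by auto

lemma good_Sabs: "good \<omega> \<Longrightarrow> \<bar>S1 n \<omega>\<bar> \<le> n" "good \<omega> \<Longrightarrow> \<bar>S2 n \<omega>\<bar> \<le> n"
proof -
  assume g: "good \<omega>"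
  have "\<bar>S1 n \<omega>\<bar> \<le> (\<Sum>k\<in>{1..n}. \<bar>X1 k \<omega>\<bar>)" unfolding S1_def by (rule sum_abs)
  also have "\<dots> \<le> (\<Sum>k\<in>{1..n}. 1)" by (intro sum_mono good_Xabs[OF g])
  finally show "\<bar>S1 n \<omega>\<bar> \<le> n" by simp
  have "\<bar>S2 n \<omega>\<bar> \<le> (\<Sum>k\<in>{1..n}. \<bar>X2 k \<omega>\<bar>)" unfolding S2_def by (rule sum_abs)
  also have "\<dots> \<le> (\<Sum>k\<in>{1..n}. 1)" by (intro sum_mono good_Xabs[OF g])
  finally show "\<bar>S2 n \<omega>\<bar> \<le> n" by simp
qed

lemma good_step:
  assumes "good \<omega>" "1 \<le> n"
  shows "X1 (Suc n) \<omega> = (2 * real (xi1 (n+1) \<omega>) - 1) * X2 (u2 n \<omega>) \<omega>"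
    and "X2 (Suc n) \<omega> = (2 * real (xi2 (n+1) \<omega>) - 1) * X1 (u1 n \<omega>) \<omega>"
proof -
  have u: "u1 n \<omega> \<in> {1..n}" "u2 n \<omega> \<in> {1..n}" using assms unfolding good_def by auto
  have e: "ew_step a b (\<lambda>n. xi1 n \<omega>) (\<lambda>n. xi2 n \<omega>) (\<lambda>n. u1 n \<omega>) (\<lambda>n. u2 n \<omega>) (Suc n) =
     ((2 * int (xi1 (n + 1) \<omega>) - 1) * snd (ew_step a b (\<lambda>n. xi1 n \<omega>) (\<lambda>n. xi2 n \<omega>) (\<lambda>n. u1 n \<omega>) (\<lambda>n. u2 n \<omega>) (u2 n \<omega>)),
      (2 * int (xi2 (n + 1) \<omega>) - 1) * fst (ew_step a b (\<lambda>n. xi1 n \<omega>) (\<lambda>n. xi2 n \<omega>) (\<lambda>n. u1 n \<omega>) (\<lambda>n. u2 n \<omega>) (u1 n \<omega>)))"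
    by (rule ew_step_Suc') (use assms u in auto)
  show "X1 (Suc n) \<omega> = (2 * real (xi1 (n+1) \<omega>) - 1) * X2 (u2 n \<omega>) \<omega>"
    unfolding X1_def X2_def e by simp
  show "X2 (Suc n) \<omega> = (2 * real (xi2 (n+1) \<omega>) - 1) * X1 (u1 n \<omega>) \<omega>"
    unfolding X1_def X2_def e by simp
qed

lemma E_xi1: "2 \<le> k \<Longrightarrow> (\<integral>\<omega>. 2 * real (xi1 k \<omega>) - 1 \<partial>M) = 2 * p1 - 1"
proof -
  assume k: "2 \<le> k"
  have "(\<integral>\<omega>. 2 * real (xi1 k \<omega>) - 1 \<partial>M) = (\<integral>z. 2 * real z - 1 \<partial>distr M (count_space UNIV) (xi1 k))"
    by (rule integral_distr[where f="\<lambda>z. 2 * real z - 1", symmetric, OF xi_meas_M(1)[OF k]]) simp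
  also have "\<dots> = 2 * p1 - 1" using xi1_distr k p1 by simp
  finally show ?thesis .
qed

lemma E_xi2: "2 \<le> k \<Longrightarrow> (\<integral>\<omega>. 2 * real (xi2 k \<omega>) - 1 \<partial>M) = 2 * p2 - 1"
proof -
  assume k: "2 \<le> k"
  have "(\<integral>\<omega>. 2 * real (xi2 k \<omega>) - 1 \<partial>M) = (\<integral>z. 2 * real z - 1 \<partial>distr M (count_space UNIV) (xi2 k))"
    by (rule integral_distr[where f="\<lambda>z. 2 * real z - 1", symmetric, OF xi_meas_M(2)[OF k]]) simp
  also have "\<dots> = 2 * p2 - 1" using xi2_distr k p2 by simp
  finally show ?thesis .
qed

lemma E_u1: "1 \<le> n \<Longrightarrow> j \<in> {1..n} \<Longrightarrow> (\<integral>\<omega>. of_bool (u1 n \<omega> = j) \<partial>M) = 1 / real n"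
proof -
  assume n: "1 \<le> n" and j: "j \<in> {1..n}"
  have "(\<integral>\<omega>. of_bool (u1 n \<omega> = j) \<partial>M) = (\<integral>z. (of_bool (z = j)::real) \<partial>distr M (count_space UNIV) (u1 n))"
    using integral_distr[OF xi_meas_M(3)[OF n], of "\<lambda>z. of_bool (z = j) :: real"] by simp
  also have "\<dots> = (\<Sum>z\<in>{1..n}. of_bool (z = j)) / real n"
    using u1_distr n by (simp add: integral_pmf_of_set)
  also have "(\<Sum>z\<in>{1..n}. of_bool (z = j) :: real) = 1" using j by (simp add: sum.delta)
  finally show ?thesis by simp
qed

lemma E_u2: "1 \<le> n \<Longrightarrow> j \<in> {1..n} \<Longrightarrow> (\<integral>\<omega>. of_bool (u2 n \<omega> = j) \<partial>M) = 1 / real n"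
proof -
  assume n: "1 \<le> n" and j: "j \<in> {1..n}"
  have "(\<integral>\<omega>. of_bool (u2 n \<omega> = j) \<partial>M) = (\<integral>z. (of_bool (z = j)::real) \<partial>distr M (count_space UNIV) (u2 n))"
    using integral_distr[OF xi_meas_M(4)[OF n], of "\<lambda>z. of_bool (z = j) :: real"] by simp
  also have "\<dots> = (\<Sum>z\<in>{1..n}. of_bool (z = j)) / real n"
    using u2_distr n by (simp add: integral_pmf_of_set)
  also have "(\<Sum>z\<in>{1..n}. of_bool (z = j) :: real) = 1" using j by (simp add: sum.delta)
  finally show ?thesis by simp
qed

lemma FF_gen_sub: "{X1 k -` A \<inter> space M | k A. k \<in> {1..n} \<and> A \<in> sets borel} \<union>
                  {X2 k -` A \<inter> space M | k A. k \<in> {1..n} \<and> A \<in> sets borel} \<subseteq> Pow (space M)"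
  by auto

lemma space_FF[simp]: "space (FF n) = space M"
  unfolding FF_def by (rule space_measure_of[OF FF_gen_sub])

lemma sets_FF: "sets (FF n) = sigma_sets (space M) ({X1 k -` A \<inter> space M | k A. k \<in> {1..n} \<and> A \<in> sets borel} \<union>
                  {X2 k -` A \<inter> space M | k A. k \<in> {1..n} \<and> A \<in> sets borel})"
  unfolding FF_def by (rule sets_measure_of[OF FF_gen_sub])

lemma sets_FF_VA: "sets (FF n) \<subseteq> sets (VA (Dn n))"
proof -
  have 1: "X1 k -` A \<inter> space M \<in> sets (VA (Dn n))" if "k \<in> {1..n}" "A \<in> sets borel" for k A
  proof -
    have "X1 k \<in> borel_measurable (VA (Dn n))" by (rule X_meas_VA(1)) (use that in auto)
    from measurable_sets[OF this that(2)] show ?thesis by simp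
  qed
  have 2: "X2 k -` A \<inter> space M \<in> sets (VA (Dn n))" if "k \<in> {1..n}" "A \<in> sets borel" for k A
  proof -
    have "X2 k \<in> borel_measurable (VA (Dn n))" by (rule X_meas_VA(2)) (use that in auto)
    from measurable_sets[OF this that(2)] show ?thesis by simp
  qed
  have "{X1 k -` A \<inter> space M | k A. k \<in> {1..n} \<and> A \<in> sets borel} \<union>
                  {X2 k -` A \<inter> space M | k A. k \<in> {1..n} \<and> A \<in> sets borel} \<subseteq> sets (VA (Dn n))"
    using 1 2 by blast
  then show ?thesis unfolding sets_FF using sets.sigma_sets_subset[of _ "VA (Dn n)"] by simp
qed

lemma sets_FF_M: "sets (FF n) \<subseteq> sets M"
  using sets_FF_VA sets_VA[OF Dn_sub] by blast

lemma subalg_FF: "subalgebra M (FF n)"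
  unfolding subalgebra_def using sets_FF_M by simp

lemma FF_meas_VA: fixes g :: "'a \<Rightarrow> real" shows "g \<in> borel_measurable (FF n) \<Longrightarrow> g \<in> borel_measurable (VA (Dn n))"
proof (rule measurableI)
  fix A :: "real set" assume g: "g \<in> borel_measurable (FF n)" and A: "A \<in> sets borel"
  from measurable_sets[OF g A] have "g -` A \<inter> space M \<in> sets (FF n)" by simp
  then show "g -` A \<inter> space (VA (Dn n)) \<in> sets (VA (Dn n))" using sets_FF_VA by auto
qed simp

lemma X_meas_FF: "1 \<le> k \<Longrightarrow> k \<le> n \<Longrightarrow> X1 k \<in> borel_measurable (FF n)"
  "1 \<le> k \<Longrightarrow> k \<le> n \<Longrightarrow> X2 k \<in> borel_measurable (FF n)"
proof -
  assume k: "1 \<le> k" "k \<le> n"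
  show "X1 k \<in> borel_measurable (FF n)"
  proof (rule measurableI)
    fix A :: "real set" assume A: "A \<in> sets borel"
    have "X1 k -` A \<inter> space M \<in> {X1 k -` A \<inter> space M | k A. k \<in> {1..n} \<and> A \<in> sets borel} \<union>
                  {X2 k -` A \<inter> space M | k A. k \<in> {1..n} \<and> A \<in> sets borel}"
      by (intro UnI1 CollectI exI conjI refl) (use k A in auto)
    then show "X1 k -` A \<inter> space (FF n) \<in> sets (FF n)" unfolding sets_FF space_FF
      by (rule sigma_sets.Basic)
  qed simp
  show "X2 k \<in> borel_measurable (FF n)"
  proof (rule measurableI)
    fix A :: "real set" assume A: "A \<in> sets borel"
    have "X2 k -` A \<inter> space M \<in> {X1 k -` A \<inter> space M | k A. k \<in> {1..n} \<and> A \<in> sets borel} \<union>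
                  {X2 k -` A \<inter> space M | k A. k \<in> {1..n} \<and> A \<in> sets borel}"
      by (intro UnI2 CollectI exI conjI refl) (use k A in auto)
    then show "X2 k -` A \<inter> space (FF n) \<in> sets (FF n)" unfolding sets_FF space_FF
      by (rule sigma_sets.Basic)
  qed simp
qed

lemma S_meas_FF: "S1 n \<in> borel_measurable (FF n)" "S2 n \<in> borel_measurable (FF n)"
proof -
  have "(\<lambda>\<omega>. \<Sum>k\<in>{1..n}. X1 k \<omega>) \<in> borel_measurable (FF n)"
    by (rule borel_measurable_sum[where f="\<lambda>k \<omega>. X1 k \<omega>"]) (rule X_meas_FF(1); simp)
  then show "S1 n \<in> borel_measurable (FF n)" unfolding S1_def by simp
  have "(\<lambda>\<omega>. \<Sum>k\<in>{1..n}. X2 k \<omega>) \<in> borel_measurable (FF n)"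
    by (rule borel_measurable_sum[where f="\<lambda>k \<omega>. X2 k \<omega>"]) (rule X_meas_FF(2); simp)
  then show "S2 n \<in> borel_measurable (FF n)" unfolding S2_def by simp
qed

end

lemma abs_mult_le1: "\<bar>x\<bar> \<le> B \<Longrightarrow> \<bar>y\<bar> \<le> 1 \<Longrightarrow> \<bar>x * y\<bar> \<le> (B::real)"
proof -
  assume a: "\<bar>x\<bar> \<le> B" "\<bar>y\<bar> \<le> 1"
  have "\<bar>x * y\<bar> = \<bar>x\<bar> * \<bar>y\<bar>" by (simp add: abs_mult)
  also have "\<dots> \<le> \<bar>x\<bar> * 1" by (rule mult_left_mono) (use a in auto)
  finally show ?thesis using a by simp
qed

lemma sum_ind: "finite A \<Longrightarrow> c \<in> A \<Longrightarrow> (\<Sum>k\<in>A. f k * of_bool (c = k)) = (f c :: real)"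
proof -
  assume "finite A" "c \<in> A"
  have "(\<Sum>k\<in>A. f k * of_bool (c = k)) = (\<Sum>k\<in>A. if k = c then f k else 0)"
    by (intro sum.cong) auto
  also have "\<dots> = f c" using \<open>finite A\<close> \<open>c \<in> A\<close> by (simp add: sum.delta')
  finally show ?thesis .
qed

context ew begin

lemma VA_mono: assumes "I \<subseteq> J" "f \<in> VA I \<rightarrow>\<^sub>M N" shows "f \<in> VA J \<rightarrow>\<^sub>M N"
proof -
  have RJ: "(\<lambda>\<omega>. restrict (fam \<omega>) J) \<in> VA J \<rightarrow>\<^sub>M PiM J (\<lambda>_. count_space UNIV)"
    unfolding VA_def by (rule measurable_vimage_algebra1) (auto simp: space_PiM)
  have "(\<lambda>\<omega>. restrict (restrict (fam \<omega>) J) I) \<in> VA J \<rightarrow>\<^sub>M PiM I (\<lambda>_. count_space UNIV)"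
    by (rule measurable_compose[OF RJ measurable_restrict_subset[OF assms(1)]])
  moreover have "(\<lambda>\<omega>. restrict (restrict (fam \<omega>) J) I) = (\<lambda>\<omega>. restrict (fam \<omega>) I)"
    using assms(1) by (auto simp: fun_eq_iff restrict_def)
  ultimately have RI: "(\<lambda>\<omega>. restrict (fam \<omega>) I) \<in> VA J \<rightarrow>\<^sub>M PiM I (\<lambda>_. count_space UNIV)" by simp
  have sub: "sets (VA I) \<subseteq> sets (VA J)"
    unfolding VA_def[of I] by (rule sets_image_in_sets[OF _ RI]) simp
  show ?thesis
  proof (rule measurableI)
    fix x assume "x \<in> space (VA J)" then show "f x \<in> space N"
      using measurable_space[OF assms(2)] by simp
  next
    fix A assume "A \<in> sets N"
    from measurable_sets[OF assms(2) this] sub show "f -` A \<inter> space (VA J) \<in> sets (VA J)" by auto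
  qed
qed

lemma xiR_meas:
  "Xi1 k \<in> I \<Longrightarrow> (\<lambda>\<omega>. 2 * real (xi1 k \<omega>) - 1) \<in> borel_measurable (VA I)"
  "Xi2 k \<in> I \<Longrightarrow> (\<lambda>\<omega>. 2 * real (xi2 k \<omega>) - 1) \<in> borel_measurable (VA I)"
  "U1 k \<in> I \<Longrightarrow> (\<lambda>\<omega>. of_bool (u1 k \<omega> = j) :: real) \<in> borel_measurable (VA I)"
  "U2 k \<in> I \<Longrightarrow> (\<lambda>\<omega>. of_bool (u2 k \<omega> = j) :: real) \<in> borel_measurable (VA I)"
  apply (rule measurable_compose[OF xi_meas_VA(1)], assumption, simp)
  apply (rule measurable_compose[OF xi_meas_VA(2)], assumption, simp)
  apply (rule measurable_compose[OF xi_meas_VA(3)], assumption, simp)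
  apply (rule measurable_compose[OF xi_meas_VA(4)], assumption, simp)
  done

lemma good_xi_abs: "good \<omega> \<Longrightarrow> 2 \<le> k \<Longrightarrow> \<bar>2 * real (xi1 k \<omega>) - 1\<bar> \<le> 1"
  "good \<omega> \<Longrightarrow> 2 \<le> k \<Longrightarrow> \<bar>2 * real (xi2 k \<omega>) - 1\<bar> \<le> 1"
  unfolding good_def by fastforce+

lemma intb: "f \<in> borel_measurable M \<Longrightarrow> AE \<omega> in M. \<bar>f \<omega>\<bar> \<le> B \<Longrightarrow> integrable M (f::'a\<Rightarrow>real)"
  by (rule integrable_const_bound[where B=B]) auto

lemma indep_int:
  fixes Z W :: "'a \<Rightarrow> real"
  assumes "I \<subseteq> ew_index" "J \<subseteq> ew_index" "I \<inter> J = {}"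
    and Z: "Z \<in> borel_measurable (VA I)" and W: "W \<in> borel_measurable (VA J)"
    and "AE \<omega> in M. \<bar>Z \<omega>\<bar> \<le> B1" "AE \<omega> in M. \<bar>W \<omega>\<bar> \<le> B2"
  shows "(\<integral>\<omega>. Z \<omega> * W \<omega> \<partial>M) = (\<integral>\<omega>. Z \<omega> \<partial>M) * (\<integral>\<omega>. W \<omega> \<partial>M)"
proof (rule indep_var_lebesgue_integral[OF indep_VA[OF assms(1-5)]])
  show "integrable M Z" by (rule intb[OF VA_meas_M[OF assms(1) Z] assms(6)])
  show "integrable M W" by (rule intb[OF VA_meas_M[OF assms(2) W] assms(7)])
qed

end

context ew begin

lemma CL1:
  fixes g :: "'a \<Rightarrow> real"
  assumes n: "1 \<le> n" and g: "g \<in> borel_measurable (VA (Dn n))" and gB: "AE \<omega> in M. \<bar>g \<omega>\<bar> \<le> B"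
  shows "(\<integral>\<omega>. g \<omega> * X1 (Suc n) \<omega> \<partial>M) = (2*p1-1) / real n * (\<integral>\<omega>. g \<omega> * S2 n \<omega> \<partial>M)"
proof -
  let ?D = "Dn n"
  let ?I1 = "Dn n \<union> {U2 n}"
  have D_sub: "Dn n \<subseteq> ew_index" by (rule Dn_sub)
  have I1_sub: "?I1 \<subseteq> ew_index" using D_sub n by (auto simp: ew_index_def)
  have Xi_sub: "{Xi1 (n+1)} \<subseteq> ew_index" using n by (auto simp: ew_index_def)
  have U2_sub: "{U2 n} \<subseteq> ew_index" using n by (auto simp: ew_index_def)
  have disj1: "?I1 \<inter> {Xi1 (n+1)} = {}" by (auto simp: Dn_def)
  have disj2: "?D \<inter> {U2 n} = {}" by (auto simp: Dn_def)
  define Z where "Z = (\<lambda>k \<omega>. g \<omega> * X2 k \<omega> * of_bool (u2 n \<omega> = k))"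
  define E where "E = (\<lambda>\<omega>. 2 * real (xi1 (n+1) \<omega>) - 1)"
  have gX_meas: "(\<lambda>\<omega>. g \<omega> * X2 k \<omega>) \<in> borel_measurable (VA ?D)" if "k \<le> n" for k
    by (intro borel_measurable_times g X_meas_VA(2)[OF order_refl that])
  have ind_meas: "(\<lambda>\<omega>. of_bool (u2 n \<omega> = k) :: real) \<in> borel_measurable (VA {U2 n})" for k
    by (rule xiR_meas(4)) simp
  have Z_meas: "Z k \<in> borel_measurable (VA ?I1)" if "k \<le> n" for k
  proof -
    have "(\<lambda>\<omega>. g \<omega> * X2 k \<omega>) \<in> borel_measurable (VA ?I1)" by (rule VA_mono[OF _ gX_meas[OF that]]) auto
    moreover have "(\<lambda>\<omega>. of_bool (u2 n \<omega> = k) :: real) \<in> borel_measurable (VA ?I1)" by (rule xiR_meas(4)) simp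
    ultimately show ?thesis unfolding Z_def by (rule borel_measurable_times)
  qed
  have E_meas: "E \<in> borel_measurable (VA {Xi1 (n+1)})" unfolding E_def by (rule xiR_meas(1)) simp
  have gXB: "AE \<omega> in M. \<bar>g \<omega> * X2 k \<omega>\<bar> \<le> B" for k
    using gB AE_good by eventually_elim (rule abs_mult_le1, auto intro: good_Xabs)
  have ZB: "AE \<omega> in M. \<bar>Z k \<omega>\<bar> \<le> B" for k
    using gXB[of k] by eventually_elim (unfold Z_def, rule abs_mult_le1, auto)
  have indB: "AE \<omega> in M. \<bar>of_bool (u2 n \<omega> = k) :: real\<bar> \<le> 1" for k by simp
  have EB: "AE \<omega> in M. \<bar>E \<omega>\<bar> \<le> 1"
    using AE_good by eventually_elim (unfold E_def, rule good_xi_abs, use n in auto)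
  have ae: "AE \<omega> in M. g \<omega> * X1 (Suc n) \<omega> = (\<Sum>k\<in>{1..n}. Z k \<omega> * E \<omega>)"
    using AE_good
  proof eventually_elim
    case (elim \<omega>)
    have u: "u2 n \<omega> \<in> {1..n}" using elim n by (auto simp: good_def)
    have "(\<Sum>k\<in>{1..n}. Z k \<omega> * E \<omega>) = (\<Sum>k\<in>{1..n}. X2 k \<omega> * of_bool (u2 n \<omega> = k) * (g \<omega> * E \<omega>))"
      unfolding Z_def by (rule sum.cong[OF refl]) (simp only: mult_ac)
    also have "\<dots> = (\<Sum>k\<in>{1..n}. X2 k \<omega> * of_bool (u2 n \<omega> = k)) * (g \<omega> * E \<omega>)"
      by (rule sum_distrib_right[symmetric])
    also have "\<dots> = X2 (u2 n \<omega>) \<omega> * (g \<omega> * E \<omega>)" using u by (simp add: sum_ind)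
    also have "\<dots> = g \<omega> * X1 (Suc n) \<omega>" using good_step(1)[OF elim n] unfolding E_def by simp
    finally show ?case by simp
  qed
  have ZE_meas: "(\<lambda>\<omega>. Z k \<omega> * E \<omega>) \<in> borel_measurable M" if "k \<le> n" for k
    by (intro borel_measurable_times VA_meas_M[OF I1_sub Z_meas[OF that]] VA_meas_M[OF Xi_sub E_meas])
  have int1: "integrable M (\<lambda>\<omega>. Z k \<omega> * E \<omega>)" if "k \<in> {1..n}" for k
  proof (rule intb[OF ZE_meas])
    show "AE \<omega> in M. \<bar>Z k \<omega> * E \<omega>\<bar> \<le> B" using ZB[of k] EB by eventually_elim (rule abs_mult_le1)
  qed (use that in auto)
  have "(\<integral>\<omega>. g \<omega> * X1 (Suc n) \<omega> \<partial>M) = (\<integral>\<omega>. (\<Sum>k\<in>{1..n}. Z k \<omega> * E \<omega>) \<partial>M)"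
  proof (rule integral_cong_AE[OF _ _ ae])
    show "(\<lambda>\<omega>. g \<omega> * X1 (Suc n) \<omega>) \<in> borel_measurable M"
      by (intro borel_measurable_times VA_meas_M[OF D_sub g] X_meas_M)
    show "(\<lambda>\<omega>. \<Sum>k\<in>{1..n}. Z k \<omega> * E \<omega>) \<in> borel_measurable M"
      by (rule borel_measurable_sum, rule ZE_meas) auto
  qed
  also have "\<dots> = (\<Sum>k\<in>{1..n}. \<integral>\<omega>. Z k \<omega> * E \<omega> \<partial>M)" by (rule Bochner_Integration.integral_sum) (rule int1)
  also have "\<dots> = (\<Sum>k\<in>{1..n}. (2*p1-1) * (1 / real n) * (\<integral>\<omega>. g \<omega> * X2 k \<omega> \<partial>M))"
  proof (rule sum.cong[OF refl])
    fix k assume k: "k \<in> {1..n}"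
    have "(\<integral>\<omega>. Z k \<omega> * E \<omega> \<partial>M) = (\<integral>\<omega>. Z k \<omega> \<partial>M) * (\<integral>\<omega>. E \<omega> \<partial>M)"
      by (rule indep_int[OF I1_sub Xi_sub disj1 Z_meas E_meas ZB EB]) (use k in auto)
    also have "(\<integral>\<omega>. E \<omega> \<partial>M) = 2*p1-1" unfolding E_def by (rule E_xi1) (use n in simp)
    also have "(\<integral>\<omega>. Z k \<omega> \<partial>M) = (\<integral>\<omega>. g \<omega> * X2 k \<omega> \<partial>M) * (\<integral>\<omega>. of_bool (u2 n \<omega> = k) \<partial>M)"
      unfolding Z_def by (rule indep_int[OF D_sub U2_sub disj2 gX_meas ind_meas gXB indB]) (use k in auto)
    also have "(\<integral>\<omega>. of_bool (u2 n \<omega> = k) \<partial>M) = 1 / real n" by (rule E_u2[OF n k])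
    finally show "(\<integral>\<omega>. Z k \<omega> * E \<omega> \<partial>M) = (2*p1-1) * (1 / real n) * (\<integral>\<omega>. g \<omega> * X2 k \<omega> \<partial>M)"
      by simp
  qed
  also have "\<dots> = (2*p1-1) / real n * (\<Sum>k\<in>{1..n}. \<integral>\<omega>. g \<omega> * X2 k \<omega> \<partial>M)"
    by (simp add: sum_distrib_left)
  also have "(\<Sum>k\<in>{1..n}. \<integral>\<omega>. g \<omega> * X2 k \<omega> \<partial>M) = (\<integral>\<omega>. g \<omega> * S2 n \<omega> \<partial>M)"
  proof -
    have "(\<integral>\<omega>. g \<omega> * S2 n \<omega> \<partial>M) = (\<integral>\<omega>. (\<Sum>k\<in>{1..n}. g \<omega> * X2 k \<omega>) \<partial>M)"
      unfolding S2_def by (simp add: sum_distrib_left)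
    also have "\<dots> = (\<Sum>k\<in>{1..n}. \<integral>\<omega>. g \<omega> * X2 k \<omega> \<partial>M)"
    proof (rule Bochner_Integration.integral_sum)
      fix k assume k: "k \<in> {1..n}"
      show "integrable M (\<lambda>\<omega>. g \<omega> * X2 k \<omega>)"
        by (rule intb[OF VA_meas_M[OF D_sub gX_meas] gXB]) (use k in auto)
    qed
    finally show ?thesis by simp
  qed
  finally show ?thesis .
qed

lemma CL2:
  fixes g :: "'a \<Rightarrow> real"
  assumes n: "1 \<le> n" and g: "g \<in> borel_measurable (VA (Dn n))" and gB: "AE \<omega> in M. \<bar>g \<omega>\<bar> \<le> B"
  shows "(\<integral>\<omega>. g \<omega> * X2 (Suc n) \<omega> \<partial>M) = (2*p2-1) / real n * (\<integral>\<omega>. g \<omega> * S1 n \<omega> \<partial>M)"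
proof -
  let ?D = "Dn n"
  let ?I1 = "Dn n \<union> {U1 n}"
  have D_sub: "Dn n \<subseteq> ew_index" by (rule Dn_sub)
  have I1_sub: "?I1 \<subseteq> ew_index" using D_sub n by (auto simp: ew_index_def)
  have Xi_sub: "{Xi2 (n+1)} \<subseteq> ew_index" using n by (auto simp: ew_index_def)
  have U1_sub: "{U1 n} \<subseteq> ew_index" using n by (auto simp: ew_index_def)
  have disj1: "?I1 \<inter> {Xi2 (n+1)} = {}" by (auto simp: Dn_def)
  have disj2: "?D \<inter> {U1 n} = {}" by (auto simp: Dn_def)
  define Z where "Z = (\<lambda>k \<omega>. g \<omega> * X1 k \<omega> * of_bool (u1 n \<omega> = k))"
  define E where "E = (\<lambda>\<omega>. 2 * real (xi2 (n+1) \<omega>) - 1)"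
  have gX_meas: "(\<lambda>\<omega>. g \<omega> * X1 k \<omega>) \<in> borel_measurable (VA ?D)" if "k \<le> n" for k
    by (intro borel_measurable_times g X_meas_VA(1)[OF order_refl that])
  have ind_meas: "(\<lambda>\<omega>. of_bool (u1 n \<omega> = k) :: real) \<in> borel_measurable (VA {U1 n})" for k
    by (rule xiR_meas(3)) simp
  have Z_meas: "Z k \<in> borel_measurable (VA ?I1)" if "k \<le> n" for k
  proof -
    have "(\<lambda>\<omega>. g \<omega> * X1 k \<omega>) \<in> borel_measurable (VA ?I1)" by (rule VA_mono[OF _ gX_meas[OF that]]) auto
    moreover have "(\<lambda>\<omega>. of_bool (u1 n \<omega> = k) :: real) \<in> borel_measurable (VA ?I1)" by (rule xiR_meas(3)) simp
    ultimately show ?thesis unfolding Z_def by (rule borel_measurable_times)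
  qed
  have E_meas: "E \<in> borel_measurable (VA {Xi2 (n+1)})" unfolding E_def by (rule xiR_meas(2)) simp
  have gXB: "AE \<omega> in M. \<bar>g \<omega> * X1 k \<omega>\<bar> \<le> B" for k
    using gB AE_good by eventually_elim (rule abs_mult_le1, auto intro: good_Xabs)
  have ZB: "AE \<omega> in M. \<bar>Z k \<omega>\<bar> \<le> B" for k
    using gXB[of k] by eventually_elim (unfold Z_def, rule abs_mult_le1, auto)
  have indB: "AE \<omega> in M. \<bar>of_bool (u1 n \<omega> = k) :: real\<bar> \<le> 1" for k by simp
  have EB: "AE \<omega> in M. \<bar>E \<omega>\<bar> \<le> 1"
    using AE_good by eventually_elim (unfold E_def, rule good_xi_abs, use n in auto)
  have ae: "AE \<omega> in M. g \<omega> * X2 (Suc n) \<omega> = (\<Sum>k\<in>{1..n}. Z k \<omega> * E \<omega>)"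
    using AE_good
  proof eventually_elim
    case (elim \<omega>)
    have u: "u1 n \<omega> \<in> {1..n}" using elim n by (auto simp: good_def)
    have "(\<Sum>k\<in>{1..n}. Z k \<omega> * E \<omega>) = (\<Sum>k\<in>{1..n}. X1 k \<omega> * of_bool (u1 n \<omega> = k) * (g \<omega> * E \<omega>))"
      unfolding Z_def by (rule sum.cong[OF refl]) (simp only: mult_ac)
    also have "\<dots> = (\<Sum>k\<in>{1..n}. X1 k \<omega> * of_bool (u1 n \<omega> = k)) * (g \<omega> * E \<omega>)"
      by (rule sum_distrib_right[symmetric])
    also have "\<dots> = X1 (u1 n \<omega>) \<omega> * (g \<omega> * E \<omega>)" using u by (simp add: sum_ind)
    also have "\<dots> = g \<omega> * X2 (Suc n) \<omega>" using good_step(2)[OF elim n] unfolding E_def by simp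
    finally show ?case by simp
  qed
  have ZE_meas: "(\<lambda>\<omega>. Z k \<omega> * E \<omega>) \<in> borel_measurable M" if "k \<le> n" for k
    by (intro borel_measurable_times VA_meas_M[OF I1_sub Z_meas[OF that]] VA_meas_M[OF Xi_sub E_meas])
  have int1: "integrable M (\<lambda>\<omega>. Z k \<omega> * E \<omega>)" if "k \<in> {1..n}" for k
  proof (rule intb[OF ZE_meas])
    show "AE \<omega> in M. \<bar>Z k \<omega> * E \<omega>\<bar> \<le> B" using ZB[of k] EB by eventually_elim (rule abs_mult_le1)
  qed (use that in auto)
  have "(\<integral>\<omega>. g \<omega> * X2 (Suc n) \<omega> \<partial>M) = (\<integral>\<omega>. (\<Sum>k\<in>{1..n}. Z k \<omega> * E \<omega>) \<partial>M)"
  proof (rule integral_cong_AE[OF _ _ ae])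
    show "(\<lambda>\<omega>. g \<omega> * X2 (Suc n) \<omega>) \<in> borel_measurable M"
      by (intro borel_measurable_times VA_meas_M[OF D_sub g] X_meas_M)
    show "(\<lambda>\<omega>. \<Sum>k\<in>{1..n}. Z k \<omega> * E \<omega>) \<in> borel_measurable M"
      by (rule borel_measurable_sum, rule ZE_meas) auto
  qed
  also have "\<dots> = (\<Sum>k\<in>{1..n}. \<integral>\<omega>. Z k \<omega> * E \<omega> \<partial>M)" by (rule Bochner_Integration.integral_sum) (rule int1)
  also have "\<dots> = (\<Sum>k\<in>{1..n}. (2*p2-1) * (1 / real n) * (\<integral>\<omega>. g \<omega> * X1 k \<omega> \<partial>M))"
  proof (rule sum.cong[OF refl])
    fix k assume k: "k \<in> {1..n}"
    have "(\<integral>\<omega>. Z k \<omega> * E \<omega> \<partial>M) = (\<integral>\<omega>. Z k \<omega> \<partial>M) * (\<integral>\<omega>. E \<omega> \<partial>M)"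
      by (rule indep_int[OF I1_sub Xi_sub disj1 Z_meas E_meas ZB EB]) (use k in auto)
    also have "(\<integral>\<omega>. E \<omega> \<partial>M) = 2*p2-1" unfolding E_def by (rule E_xi2) (use n in simp)
    also have "(\<integral>\<omega>. Z k \<omega> \<partial>M) = (\<integral>\<omega>. g \<omega> * X1 k \<omega> \<partial>M) * (\<integral>\<omega>. of_bool (u1 n \<omega> = k) \<partial>M)"
      unfolding Z_def by (rule indep_int[OF D_sub U1_sub disj2 gX_meas ind_meas gXB indB]) (use k in auto)
    also have "(\<integral>\<omega>. of_bool (u1 n \<omega> = k) \<partial>M) = 1 / real n" by (rule E_u1[OF n k])
    finally show "(\<integral>\<omega>. Z k \<omega> * E \<omega> \<partial>M) = (2*p2-1) * (1 / real n) * (\<integral>\<omega>. g \<omega> * X1 k \<omega> \<partial>M)"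
      by simp
  qed
  also have "\<dots> = (2*p2-1) / real n * (\<Sum>k\<in>{1..n}. \<integral>\<omega>. g \<omega> * X1 k \<omega> \<partial>M)"
    by (simp add: sum_distrib_left)
  also have "(\<Sum>k\<in>{1..n}. \<integral>\<omega>. g \<omega> * X1 k \<omega> \<partial>M) = (\<integral>\<omega>. g \<omega> * S1 n \<omega> \<partial>M)"
  proof -
    have "(\<integral>\<omega>. g \<omega> * S1 n \<omega> \<partial>M) = (\<integral>\<omega>. (\<Sum>k\<in>{1..n}. g \<omega> * X1 k \<omega>) \<partial>M)"
      unfolding S1_def by (simp add: sum_distrib_left)
    also have "\<dots> = (\<Sum>k\<in>{1..n}. \<integral>\<omega>. g \<omega> * X1 k \<omega> \<partial>M)"
    proof (rule Bochner_Integration.integral_sum)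
      fix k assume k: "k \<in> {1..n}"
      show "integrable M (\<lambda>\<omega>. g \<omega> * X1 k \<omega>)"
        by (rule intb[OF VA_meas_M[OF D_sub gX_meas] gXB]) (use k in auto)
    qed
    finally show ?thesis by simp
  qed
  finally show ?thesis .
qed

end

lemma double_sum_ind:
  assumes "finite A" "c1 \<in> A" "c2 \<in> A"
  shows "(\<Sum>k\<in>A. \<Sum>l\<in>A. (f k * of_bool (c2 = k)) * (h l * of_bool (c1 = l)) * c) = f c2 * h c1 * (c::real)"
proof -
  have "(\<Sum>l\<in>A. X * (h l * of_bool (c1 = l)) * c) = X * h c1 * c" for X
  proof -
    have "(\<Sum>l\<in>A. X * (h l * of_bool (c1 = l)) * c) = (\<Sum>l\<in>A. (h l * of_bool (c1 = l)) * (X * c))"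
      by (rule sum.cong[OF refl]) (simp only: mult_ac)
    also have "\<dots> = (\<Sum>l\<in>A. h l * of_bool (c1 = l)) * (X * c)" by (rule sum_distrib_right[symmetric])
    also have "\<dots> = h c1 * (X * c)" using assms by (simp only: sum_ind)
    finally show ?thesis by simp
  qed
  then have "(\<Sum>k\<in>A. \<Sum>l\<in>A. (f k * of_bool (c2 = k)) * (h l * of_bool (c1 = l)) * c) =
      (\<Sum>k\<in>A. (f k * of_bool (c2 = k)) * h c1 * c)" by simp
  also have "\<dots> = (\<Sum>k\<in>A. (f k * of_bool (c2 = k)) * (h c1 * c))"
    by (rule sum.cong[OF refl]) (simp only: mult_ac)
  also have "\<dots> = (\<Sum>k\<in>A. f k * of_bool (c2 = k)) * (h c1 * c)" by (rule sum_distrib_right[symmetric])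
  also have "\<dots> = f c2 * (h c1 * c)" using assms by (simp only: sum_ind)
  finally show ?thesis by simp
qed

context ew begin

lemma CL3:
  fixes g :: "'a \<Rightarrow> real"
  assumes n: "1 \<le> n" and g: "g \<in> borel_measurable (VA (Dn n))" and gB: "AE \<omega> in M. \<bar>g \<omega>\<bar> \<le> B"
  shows "(\<integral>\<omega>. g \<omega> * X1 (Suc n) \<omega> * X2 (Suc n) \<omega> \<partial>M) =
     (2*p1-1) * (2*p2-1) / (real n)\<^sup>2 * (\<integral>\<omega>. g \<omega> * S1 n \<omega> * S2 n \<omega> \<partial>M)"
proof -
  let ?D = "Dn n"
  let ?Ia = "Dn n \<union> {U1 n}"
  let ?Ib = "Dn n \<union> {U1 n, U2 n}"
  let ?Ic = "Dn n \<union> {U1 n, U2 n, Xi2 (n+1)}"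
  have D_sub: "Dn n \<subseteq> ew_index" by (rule Dn_sub)
  have Ia_sub: "?Ia \<subseteq> ew_index" using D_sub n by (auto simp: ew_index_def)
  have Ib_sub: "?Ib \<subseteq> ew_index" using D_sub n by (auto simp: ew_index_def)
  have Ic_sub: "?Ic \<subseteq> ew_index" using D_sub n by (auto simp: ew_index_def)
  have J_sub: "{Xi1 (n+1)} \<subseteq> ew_index" "{Xi2 (n+1)} \<subseteq> ew_index" "{U1 n} \<subseteq> ew_index" "{U2 n} \<subseteq> ew_index"
    using n by (auto simp: ew_index_def)
  have disj: "?Ic \<inter> {Xi1 (n+1)} = {}" "?Ib \<inter> {Xi2 (n+1)} = {}" "?Ia \<inter> {U2 n} = {}" "?D \<inter> {U1 n} = {}"
    by (auto simp: Dn_def)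
  define E1 where "E1 = (\<lambda>\<omega>. 2 * real (xi1 (n+1) \<omega>) - 1)"
  define E2 where "E2 = (\<lambda>\<omega>. 2 * real (xi2 (n+1) \<omega>) - 1)"
  define W0 where "W0 = (\<lambda>k l \<omega>. g \<omega> * X2 k \<omega> * X1 l \<omega>)"
  define W1 where "W1 = (\<lambda>k l \<omega>. W0 k l \<omega> * of_bool (u1 n \<omega> = l))"
  define W2 where "W2 = (\<lambda>k l \<omega>. W1 k l \<omega> * of_bool (u2 n \<omega> = k))"
  define W3 where "W3 = (\<lambda>k l \<omega>. W2 k l \<omega> * E2 \<omega>)"
  have E1_meas: "E1 \<in> borel_measurable (VA {Xi1 (n+1)})" unfolding E1_def by (rule xiR_meas(1)) simp
  have E2_meas: "E2 \<in> borel_measurable (VA {Xi2 (n+1)})" unfolding E2_def by (rule xiR_meas(2)) simp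
  have I1_meas: "(\<lambda>\<omega>. of_bool (u1 n \<omega> = l) :: real) \<in> borel_measurable (VA {U1 n})" for l
    by (rule xiR_meas(3)) simp
  have I2_meas: "(\<lambda>\<omega>. of_bool (u2 n \<omega> = k) :: real) \<in> borel_measurable (VA {U2 n})" for k
    by (rule xiR_meas(4)) simp
  have W0_meas: "W0 k l \<in> borel_measurable (VA ?D)" if "k \<le> n" "l \<le> n" for k l
    unfolding W0_def
    by (intro borel_measurable_times g X_meas_VA(2)[OF order_refl that(1)] X_meas_VA(1)[OF order_refl that(2)])
  have W1_meas: "W1 k l \<in> borel_measurable (VA ?Ia)" if "k \<le> n" "l \<le> n" for k l
    unfolding W1_def
    by (rule borel_measurable_times[OF VA_mono[OF _ W0_meas[OF that]] VA_mono[OF _ I1_meas]]) auto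
  have W2_meas: "W2 k l \<in> borel_measurable (VA ?Ib)" if "k \<le> n" "l \<le> n" for k l
    unfolding W2_def
    by (rule borel_measurable_times[OF VA_mono[OF _ W1_meas[OF that]] VA_mono[OF _ I2_meas]]) auto
  have W3_meas: "W3 k l \<in> borel_measurable (VA ?Ic)" if "k \<le> n" "l \<le> n" for k l
    unfolding W3_def
    by (rule borel_measurable_times[OF VA_mono[OF _ W2_meas[OF that]] VA_mono[OF _ E2_meas]]) auto
  have E1B: "AE \<omega> in M. \<bar>E1 \<omega>\<bar> \<le> 1"
    using AE_good by eventually_elim (unfold E1_def, rule good_xi_abs, use n in auto)
  have E2B: "AE \<omega> in M. \<bar>E2 \<omega>\<bar> \<le> 1"
    using AE_good by eventually_elim (unfold E2_def, rule good_xi_abs, use n in auto)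
  have I1B: "AE \<omega> in M. \<bar>of_bool (u1 n \<omega> = l) :: real\<bar> \<le> 1" for l by simp
  have I2B: "AE \<omega> in M. \<bar>of_bool (u2 n \<omega> = k) :: real\<bar> \<le> 1" for k by simp
  have W0B: "AE \<omega> in M. \<bar>W0 k l \<omega>\<bar> \<le> B" for k l
    using gB AE_good by eventually_elim (unfold W0_def, (rule abs_mult_le1)+, auto intro: good_Xabs)
  have W1B: "AE \<omega> in M. \<bar>W1 k l \<omega>\<bar> \<le> B" for k l
    using W0B[of k l] by eventually_elim (unfold W1_def, rule abs_mult_le1, auto)
  have W2B: "AE \<omega> in M. \<bar>W2 k l \<omega>\<bar> \<le> B" for k l
    using W1B[of k l] by eventually_elim (unfold W2_def, rule abs_mult_le1, auto)
  have W3B: "AE \<omega> in M. \<bar>W3 k l \<omega>\<bar> \<le> B" for k l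
    using W2B[of k l] E2B by eventually_elim (unfold W3_def, rule abs_mult_le1, auto)
  have ae: "AE \<omega> in M. g \<omega> * X1 (Suc n) \<omega> * X2 (Suc n) \<omega> = (\<Sum>k\<in>{1..n}. \<Sum>l\<in>{1..n}. W3 k l \<omega> * E1 \<omega>)"
    using AE_good
  proof eventually_elim
    case (elim \<omega>)
    have u: "u1 n \<omega> \<in> {1..n}" "u2 n \<omega> \<in> {1..n}" using elim n by (auto simp: good_def)
    have "(\<Sum>k\<in>{1..n}. \<Sum>l\<in>{1..n}. W3 k l \<omega> * E1 \<omega>) =
       (\<Sum>k\<in>{1..n}. \<Sum>l\<in>{1..n}. (X2 k \<omega> * of_bool (u2 n \<omega> = k)) * (X1 l \<omega> * of_bool (u1 n \<omega> = l)) * (g \<omega> * E2 \<omega> * E1 \<omega>))"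
      unfolding W3_def W2_def W1_def W0_def by (intro sum.cong refl) (simp only: mult_ac)
    also have "\<dots> = X2 (u2 n \<omega>) \<omega> * X1 (u1 n \<omega>) \<omega> * (g \<omega> * E2 \<omega> * E1 \<omega>)"
      by (rule double_sum_ind) (use u in auto)
    also have "\<dots> = g \<omega> * X1 (Suc n) \<omega> * X2 (Suc n) \<omega>"
      using good_step[OF elim n] unfolding E1_def E2_def by simp
    finally show ?case by simp
  qed
  have W3E_meas: "(\<lambda>\<omega>. W3 k l \<omega> * E1 \<omega>) \<in> borel_measurable M" if "k \<le> n" "l \<le> n" for k l
    by (intro borel_measurable_times VA_meas_M[OF Ic_sub W3_meas[OF that]] VA_meas_M[OF J_sub(1) E1_meas])
  have int3: "integrable M (\<lambda>\<omega>. W3 k l \<omega> * E1 \<omega>)" if "k \<le> n" "l \<le> n" for k l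
  proof (rule intb[OF W3E_meas[OF that]])
    show "AE \<omega> in M. \<bar>W3 k l \<omega> * E1 \<omega>\<bar> \<le> B" using W3B[of k l] E1B by eventually_elim (rule abs_mult_le1)
  qed
  have "(\<integral>\<omega>. g \<omega> * X1 (Suc n) \<omega> * X2 (Suc n) \<omega> \<partial>M) = (\<integral>\<omega>. (\<Sum>k\<in>{1..n}. \<Sum>l\<in>{1..n}. W3 k l \<omega> * E1 \<omega>) \<partial>M)"
  proof (rule integral_cong_AE[OF _ _ ae])
    show "(\<lambda>\<omega>. g \<omega> * X1 (Suc n) \<omega> * X2 (Suc n) \<omega>) \<in> borel_measurable M"
      by (intro borel_measurable_times VA_meas_M[OF D_sub g] X_meas_M)
    show "(\<lambda>\<omega>. \<Sum>k\<in>{1..n}. \<Sum>l\<in>{1..n}. W3 k l \<omega> * E1 \<omega>) \<in> borel_measurable M"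
      by (rule borel_measurable_sum, rule borel_measurable_sum, rule W3E_meas) auto
  qed
  also have "\<dots> = (\<Sum>k\<in>{1..n}. \<integral>\<omega>. (\<Sum>l\<in>{1..n}. W3 k l \<omega> * E1 \<omega>) \<partial>M)"
    by (rule Bochner_Integration.integral_sum, rule Bochner_Integration.integrable_sum, rule int3) auto
  also have "\<dots> = (\<Sum>k\<in>{1..n}. \<Sum>l\<in>{1..n}. \<integral>\<omega>. W3 k l \<omega> * E1 \<omega> \<partial>M)"
    by (rule sum.cong[OF refl], rule Bochner_Integration.integral_sum, rule int3) auto
  also have "\<dots> = (\<Sum>k\<in>{1..n}. \<Sum>l\<in>{1..n}. ((2*p1-1) * (2*p2-1) / (real n)\<^sup>2) * (\<integral>\<omega>. W0 k l \<omega> \<partial>M))"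
  proof (intro sum.cong refl)
    fix k l assume k: "k \<in> {1..n}" and l: "l \<in> {1..n}"
    then have kl: "k \<le> n" "l \<le> n" by auto
    have "(\<integral>\<omega>. W3 k l \<omega> * E1 \<omega> \<partial>M) = (\<integral>\<omega>. W3 k l \<omega> \<partial>M) * (\<integral>\<omega>. E1 \<omega> \<partial>M)"
      by (rule indep_int[OF Ic_sub J_sub(1) disj(1) W3_meas[OF kl] E1_meas W3B E1B])
    also have "(\<integral>\<omega>. E1 \<omega> \<partial>M) = 2*p1-1" unfolding E1_def by (rule E_xi1) (use n in simp)
    also have "(\<integral>\<omega>. W3 k l \<omega> \<partial>M) = (\<integral>\<omega>. W2 k l \<omega> \<partial>M) * (\<integral>\<omega>. E2 \<omega> \<partial>M)"
      unfolding W3_def by (rule indep_int[OF Ib_sub J_sub(2) disj(2) W2_meas[OF kl] E2_meas W2B E2B])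
    also have "(\<integral>\<omega>. E2 \<omega> \<partial>M) = 2*p2-1" unfolding E2_def by (rule E_xi2) (use n in simp)
    also have "(\<integral>\<omega>. W2 k l \<omega> \<partial>M) = (\<integral>\<omega>. W1 k l \<omega> \<partial>M) * (\<integral>\<omega>. of_bool (u2 n \<omega> = k) \<partial>M)"
      unfolding W2_def by (rule indep_int[OF Ia_sub J_sub(4) disj(3) W1_meas[OF kl] I2_meas W1B I2B])
    also have "(\<integral>\<omega>. of_bool (u2 n \<omega> = k) \<partial>M) = 1 / real n" by (rule E_u2[OF n k])
    also have "(\<integral>\<omega>. W1 k l \<omega> \<partial>M) = (\<integral>\<omega>. W0 k l \<omega> \<partial>M) * (\<integral>\<omega>. of_bool (u1 n \<omega> = l) \<partial>M)"
      unfolding W1_def by (rule indep_int[OF D_sub J_sub(3) disj(4) W0_meas[OF kl] I1_meas W0B I1B])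
    also have "(\<integral>\<omega>. of_bool (u1 n \<omega> = l) \<partial>M) = 1 / real n" by (rule E_u1[OF n l])
    finally show "(\<integral>\<omega>. W3 k l \<omega> * E1 \<omega> \<partial>M) = ((2*p1-1) * (2*p2-1) / (real n)\<^sup>2) * (\<integral>\<omega>. W0 k l \<omega> \<partial>M)"
      by (simp add: power2_eq_square)
  qed
  also have "\<dots> = ((2*p1-1) * (2*p2-1) / (real n)\<^sup>2) * (\<Sum>k\<in>{1..n}. \<Sum>l\<in>{1..n}. \<integral>\<omega>. W0 k l \<omega> \<partial>M)"
    by (simp add: sum_distrib_left)
  also have "(\<Sum>k\<in>{1..n}. \<Sum>l\<in>{1..n}. \<integral>\<omega>. W0 k l \<omega> \<partial>M) = (\<integral>\<omega>. g \<omega> * S1 n \<omega> * S2 n \<omega> \<partial>M)"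
  proof -
    have int0: "integrable M (W0 k l)" if "k \<in> {1..n}" "l \<in> {1..n}" for k l
      by (rule intb[OF VA_meas_M[OF D_sub W0_meas] W0B]) (use that in auto)
    have "(\<integral>\<omega>. g \<omega> * S1 n \<omega> * S2 n \<omega> \<partial>M) = (\<integral>\<omega>. (\<Sum>k\<in>{1..n}. \<Sum>l\<in>{1..n}. W0 k l \<omega>) \<partial>M)"
    proof (rule Bochner_Integration.integral_cong[OF refl])
      fix \<omega>
      have "S1 n \<omega> * S2 n \<omega> = (\<Sum>k\<in>{1..n}. \<Sum>l\<in>{1..n}. X2 k \<omega> * X1 l \<omega>)"
        unfolding S1_def S2_def by (subst mult.commute) (rule sum_product)
      then show "g \<omega> * S1 n \<omega> * S2 n \<omega> = (\<Sum>k\<in>{1..n}. \<Sum>l\<in>{1..n}. W0 k l \<omega>)"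
        unfolding W0_def by (simp add: sum_distrib_left mult.assoc)
    qed
    also have "\<dots> = (\<Sum>k\<in>{1..n}. \<integral>\<omega>. (\<Sum>l\<in>{1..n}. W0 k l \<omega>) \<partial>M)"
      by (rule Bochner_Integration.integral_sum, rule Bochner_Integration.integrable_sum, rule int0) auto
    also have "\<dots> = (\<Sum>k\<in>{1..n}. \<Sum>l\<in>{1..n}. \<integral>\<omega>. W0 k l \<omega> \<partial>M)"
      by (rule sum.cong[OF refl], rule Bochner_Integration.integral_sum, rule int0) auto
    finally show ?thesis by simp
  qed
  finally show ?thesis .
qed

end

context ew begin

lemma FF_meas_M: "f \<in> borel_measurable (FF j) \<Longrightarrow> f \<in> borel_measurable M"
  by (rule measurable_from_subalg[OF subalg_FF])

lemma good_Sdiv: "good \<omega> \<Longrightarrow> 1 \<le> j \<Longrightarrow> \<bar>S1 j \<omega> / real j\<bar> \<le> 1" "good \<omega> \<Longrightarrow> 1 \<le> j \<Longrightarrow> \<bar>S2 j \<omega> / real j\<bar> \<le> 1"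
  using good_Sabs[of \<omega> j] by (auto simp: divide_le_eq_1 abs_divide)

lemma GENR:
  fixes f d0 d1 d2 d3 :: "'a \<Rightarrow> real"
  assumes j: "1 \<le> j" and f: "f \<in> borel_measurable M"
    and d: "d0 \<in> borel_measurable (FF j)" "d1 \<in> borel_measurable (FF j)"
           "d2 \<in> borel_measurable (FF j)" "d3 \<in> borel_measurable (FF j)"
    and dB: "AE \<omega> in M. \<bar>d0 \<omega>\<bar> \<le> B \<and> \<bar>d1 \<omega>\<bar> \<le> B \<and> \<bar>d2 \<omega>\<bar> \<le> B \<and> \<bar>d3 \<omega>\<bar> \<le> B"
    and ae: "AE \<omega> in M. f \<omega> = d0 \<omega> + d1 \<omega> * X1 (Suc j) \<omega> + d2 \<omega> * X2 (Suc j) \<omega>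
                               + d3 \<omega> * X1 (Suc j) \<omega> * X2 (Suc j) \<omega>"
  shows "AE \<omega> in M. real_cond_exp M (FF j) f \<omega> =
            d0 \<omega> + d1 \<omega> * ((2*p1-1) * S2 j \<omega> / real j) + d2 \<omega> * ((2*p2-1) * S1 j \<omega> / real j)
            + d3 \<omega> * ((2*p1-1) * (2*p2-1) * S1 j \<omega> * S2 j \<omega> / (real j)\<^sup>2)"
proof -
  interpret fms: finite_measure_subalgebra M "FF j"
    by unfold_locales (rule subalg_FF)
  let ?Y1 = "X1 (Suc j)" and ?Y2 = "X2 (Suc j)"
  let ?c1 = "(2*p1-1) / real j" and ?c2 = "(2*p2-1) / real j" and ?c3 = "(2*p1-1) * (2*p2-1) / (real j)\<^sup>2"
  define g where "g = (\<lambda>\<omega>. d0 \<omega> + d1 \<omega> * ((2*p1-1) * S2 j \<omega> / real j) + d2 \<omega> * ((2*p2-1) * S1 j \<omega> / real j)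
            + d3 \<omega> * ((2*p1-1) * (2*p2-1) * S1 j \<omega> * S2 j \<omega> / (real j)\<^sup>2))"
  have dM: "d0 \<in> borel_measurable M" "d1 \<in> borel_measurable M" "d2 \<in> borel_measurable M" "d3 \<in> borel_measurable M"
    using d by (auto intro: FF_meas_M)
  have g_meas: "g \<in> borel_measurable (FF j)"
    unfolding g_def using d S_meas_FF[of j] by measurable
  have p: "\<bar>2*p1-1\<bar> \<le> 1" "\<bar>2*p2-1\<bar> \<le> 1" using p1 p2 by auto
  have gB: "AE \<omega> in M. \<bar>g \<omega>\<bar> \<le> 4 * B"
    using dB AE_good
  proof eventually_elim
    case (elim \<omega>)
    have s: "\<bar>S1 j \<omega> / real j\<bar> \<le> 1" "\<bar>S2 j \<omega> / real j\<bar> \<le> 1" using good_Sdiv[OF elim(2) j] by auto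
    have q1: "\<bar>(2*p1-1) * S2 j \<omega> / real j\<bar> \<le> 1"
    proof -
      have "(2*p1-1) * S2 j \<omega> / real j = S2 j \<omega> / real j * (2*p1-1)" by simp
      then show ?thesis using abs_mult_le1[OF s(2) p(1)] by metis
    qed
    have q2: "\<bar>(2*p2-1) * S1 j \<omega> / real j\<bar> \<le> 1"
    proof -
      have "(2*p2-1) * S1 j \<omega> / real j = S1 j \<omega> / real j * (2*p2-1)" by simp
      then show ?thesis using abs_mult_le1[OF s(1) p(2)] by metis
    qed
    have q3: "\<bar>(2*p1-1) * (2*p2-1) * S1 j \<omega> * S2 j \<omega> / (real j)\<^sup>2\<bar> \<le> 1"
    proof -
      have "(2*p1-1) * (2*p2-1) * S1 j \<omega> * S2 j \<omega> / (real j)\<^sup>2 = ((2*p2-1) * S1 j \<omega> / real j) * ((2*p1-1) * S2 j \<omega> / real j)"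
        by (simp add: power2_eq_square)
      then show ?thesis using abs_mult_le1[OF q2 q1] by metis
    qed
    have t1: "\<bar>d1 \<omega> * ((2*p1-1) * S2 j \<omega> / real j)\<bar> \<le> B"
      using elim(1) q1 by (intro abs_mult_le1) auto
    have t2: "\<bar>d2 \<omega> * ((2*p2-1) * S1 j \<omega> / real j)\<bar> \<le> B"
      using elim(1) q2 by (intro abs_mult_le1) auto
    have t3: "\<bar>d3 \<omega> * ((2*p1-1) * (2*p2-1) * S1 j \<omega> * S2 j \<omega> / (real j)\<^sup>2)\<bar> \<le> B"
      using elim(1) q3 by (intro abs_mult_le1) auto
    show ?case unfolding g_def using elim(1) t1 t2 t3 by linarith
  qed
  have int_g: "integrable M g" by (rule intb[OF FF_meas_M[OF g_meas] gB])
  have fB: "AE \<omega> in M. \<bar>f \<omega>\<bar> \<le> 4 * B"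
    using ae dB AE_good
  proof eventually_elim
    case (elim \<omega>)
    have x: "\<bar>?Y1 \<omega>\<bar> \<le> 1" "\<bar>?Y2 \<omega>\<bar> \<le> 1" using good_Xabs[OF elim(3)] by auto
    have "\<bar>d1 \<omega> * ?Y1 \<omega>\<bar> \<le> B" "\<bar>d2 \<omega> * ?Y2 \<omega>\<bar> \<le> B" "\<bar>d3 \<omega> * ?Y1 \<omega> * ?Y2 \<omega>\<bar> \<le> B"
      using elim(2) x by (auto intro!: abs_mult_le1)
    then show ?case unfolding elim(1) using elim(2) by linarith
  qed
  have int_f: "integrable M f" by (rule intb[OF f fB])
  have key: "(\<integral>\<omega>. indicator A \<omega> * f \<omega> \<partial>M) = (\<integral>\<omega>. indicator A \<omega> * g \<omega> \<partial>M)" if A: "A \<in> sets (FF j)" for A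
  proof -
    define i where "i = (\<lambda>\<omega>. indicator A \<omega> :: real)"
    have i_meas: "i \<in> borel_measurable (FF j)" unfolding i_def using A by measurable
    have iB: "\<bar>i \<omega>\<bar> \<le> 1" for \<omega> unfolding i_def by (auto simp: indicator_def)
    define ds where "ds = (\<lambda>k::nat. if k = 0 then d0 else if k = 1 then d1 else if k = 2 then d2 else d3)"
    have ds_meas: "ds k \<in> borel_measurable (FF j)" for k unfolding ds_def using d by simp
    have dsB: "AE \<omega> in M. \<bar>ds k \<omega>\<bar> \<le> B" for k
      using dB by eventually_elim (simp add: ds_def)
    define h where "h = (\<lambda>k \<omega>. i \<omega> * ds k \<omega>)"
    have h_meas: "h k \<in> borel_measurable (FF j)" for k
      unfolding h_def by (rule borel_measurable_times[OF i_meas ds_meas])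
    have hB: "AE \<omega> in M. \<bar>h k \<omega>\<bar> \<le> B" for k
      using dsB[of k] by eventually_elim (unfold h_def, subst mult.commute, rule abs_mult_le1[OF _ iB])
    have hM: "h k \<in> borel_measurable M" for k by (rule FF_meas_M[OF h_meas])
    have hVA: "h k \<in> borel_measurable (VA (Dn j))" for k by (rule FF_meas_VA[OF h_meas])
    have intY: "integrable M (\<lambda>\<omega>. h k \<omega> * ?Y1 \<omega>)" "integrable M (\<lambda>\<omega>. h k \<omega> * ?Y2 \<omega>)"
      "integrable M (\<lambda>\<omega>. h k \<omega> * ?Y1 \<omega> * ?Y2 \<omega>)" "integrable M (h k)" for k
    proof -
      show "integrable M (\<lambda>\<omega>. h k \<omega> * ?Y1 \<omega>)"
      proof (rule intb[where B=B])
        show "(\<lambda>\<omega>. h k \<omega> * ?Y1 \<omega>) \<in> borel_measurable M" using hM[of k] by measurable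
        show "AE \<omega> in M. \<bar>h k \<omega> * ?Y1 \<omega>\<bar> \<le> B" using hB[of k] AE_good by eventually_elim (rule abs_mult_le1, auto intro: good_Xabs)
      qed
      show "integrable M (\<lambda>\<omega>. h k \<omega> * ?Y2 \<omega>)"
      proof (rule intb[where B=B])
        show "(\<lambda>\<omega>. h k \<omega> * ?Y2 \<omega>) \<in> borel_measurable M" using hM[of k] by measurable
        show "AE \<omega> in M. \<bar>h k \<omega> * ?Y2 \<omega>\<bar> \<le> B" using hB[of k] AE_good by eventually_elim (rule abs_mult_le1, auto intro: good_Xabs)
      qed
      show "integrable M (\<lambda>\<omega>. h k \<omega> * ?Y1 \<omega> * ?Y2 \<omega>)"
      proof (rule intb[where B=B])
        show "(\<lambda>\<omega>. h k \<omega> * ?Y1 \<omega> * ?Y2 \<omega>) \<in> borel_measurable M" using hM[of k] by measurable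
        show "AE \<omega> in M. \<bar>h k \<omega> * ?Y1 \<omega> * ?Y2 \<omega>\<bar> \<le> B" using hB[of k] AE_good by eventually_elim ((rule abs_mult_le1)+, auto intro: good_Xabs)
      qed
      show "integrable M (h k)" by (rule intb[OF hM hB])
    qed
    have intS: "integrable M (\<lambda>\<omega>. h k \<omega> * S2 j \<omega>)" "integrable M (\<lambda>\<omega>. h k \<omega> * S1 j \<omega>)"
      "integrable M (\<lambda>\<omega>. h k \<omega> * S1 j \<omega> * S2 j \<omega>)" for k
    proof -
      have sB: "AE \<omega> in M. \<bar>S1 j \<omega>\<bar> \<le> real j \<and> \<bar>S2 j \<omega>\<bar> \<le> real j" using AE_good by eventually_elim (use good_Sabs in auto)
      have hB0: "AE \<omega> in M. 0 \<le> B" using hB[of k] by eventually_elim auto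
      show "integrable M (\<lambda>\<omega>. h k \<omega> * S2 j \<omega>)"
      proof (rule intb[where B="B * real j"])
        show "(\<lambda>\<omega>. h k \<omega> * S2 j \<omega>) \<in> borel_measurable M" using hM[of k] by measurable
        show "AE \<omega> in M. \<bar>h k \<omega> * S2 j \<omega>\<bar> \<le> B * real j" using hB[of k] sB by eventually_elim (auto simp: abs_mult intro!: mult_mono)
      qed
      show "integrable M (\<lambda>\<omega>. h k \<omega> * S1 j \<omega>)"
      proof (rule intb[where B="B * real j"])
        show "(\<lambda>\<omega>. h k \<omega> * S1 j \<omega>) \<in> borel_measurable M" using hM[of k] by measurable
        show "AE \<omega> in M. \<bar>h k \<omega> * S1 j \<omega>\<bar> \<le> B * real j" using hB[of k] sB by eventually_elim (auto simp: abs_mult intro!: mult_mono)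
      qed
      show "integrable M (\<lambda>\<omega>. h k \<omega> * S1 j \<omega> * S2 j \<omega>)"
      proof (rule intb[where B="B * real j * real j"])
        show "(\<lambda>\<omega>. h k \<omega> * S1 j \<omega> * S2 j \<omega>) \<in> borel_measurable M" using hM[of k] by measurable
        show "AE \<omega> in M. \<bar>h k \<omega> * S1 j \<omega> * S2 j \<omega>\<bar> \<le> B * real j * real j" using hB[of k] sB by eventually_elim (auto simp: abs_mult intro!: mult_mono)
      qed
    qed
    have "(\<integral>\<omega>. indicator A \<omega> * f \<omega> \<partial>M) = (\<integral>\<omega>. h 0 \<omega> + h 1 \<omega> * ?Y1 \<omega> + h 2 \<omega> * ?Y2 \<omega> + h 3 \<omega> * ?Y1 \<omega> * ?Y2 \<omega> \<partial>M)"
    proof (rule integral_cong_AE)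
      show "(\<lambda>\<omega>. indicator A \<omega> * f \<omega>) \<in> borel_measurable M" using A sets_FF_M by (intro borel_measurable_times borel_measurable_indicator f) auto
      show "(\<lambda>\<omega>. h 0 \<omega> + h 1 \<omega> * ?Y1 \<omega> + h 2 \<omega> * ?Y2 \<omega> + h 3 \<omega> * ?Y1 \<omega> * ?Y2 \<omega>) \<in> borel_measurable M"
        using hM by measurable
      show "AE \<omega> in M. indicator A \<omega> * f \<omega> = h 0 \<omega> + h 1 \<omega> * ?Y1 \<omega> + h 2 \<omega> * ?Y2 \<omega> + h 3 \<omega> * ?Y1 \<omega> * ?Y2 \<omega>"
        using ae by eventually_elim (simp add: h_def i_def ds_def algebra_simps)
    qed
    also have "\<dots> = (\<integral>\<omega>. h 0 \<omega> \<partial>M) + (\<integral>\<omega>. h 1 \<omega> * ?Y1 \<omega> \<partial>M) + (\<integral>\<omega>. h 2 \<omega> * ?Y2 \<omega> \<partial>M) + (\<integral>\<omega>. h 3 \<omega> * ?Y1 \<omega> * ?Y2 \<omega> \<partial>M)"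
      using intY by simp
    also have "(\<integral>\<omega>. h 1 \<omega> * ?Y1 \<omega> \<partial>M) = ?c1 * (\<integral>\<omega>. h 1 \<omega> * S2 j \<omega> \<partial>M)"
      by (rule CL1[OF j hVA hB])
    also have "(\<integral>\<omega>. h 2 \<omega> * ?Y2 \<omega> \<partial>M) = ?c2 * (\<integral>\<omega>. h 2 \<omega> * S1 j \<omega> \<partial>M)"
      by (rule CL2[OF j hVA hB])
    also have "(\<integral>\<omega>. h 3 \<omega> * ?Y1 \<omega> * ?Y2 \<omega> \<partial>M) = ?c3 * (\<integral>\<omega>. h 3 \<omega> * S1 j \<omega> * S2 j \<omega> \<partial>M)"
      by (rule CL3[OF j hVA hB])
    also have "(\<integral>\<omega>. h 0 \<omega> \<partial>M) + ?c1 * (\<integral>\<omega>. h 1 \<omega> * S2 j \<omega> \<partial>M) + ?c2 * (\<integral>\<omega>. h 2 \<omega> * S1 j \<omega> \<partial>M)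
              + ?c3 * (\<integral>\<omega>. h 3 \<omega> * S1 j \<omega> * S2 j \<omega> \<partial>M)
       = (\<integral>\<omega>. h 0 \<omega> + ?c1 * (h 1 \<omega> * S2 j \<omega>) + ?c2 * (h 2 \<omega> * S1 j \<omega>) + ?c3 * (h 3 \<omega> * S1 j \<omega> * S2 j \<omega>) \<partial>M)"
      using intY intS by simp
    also have "\<dots> = (\<integral>\<omega>. indicator A \<omega> * g \<omega> \<partial>M)"
      by (rule Bochner_Integration.integral_cong[OF refl]) (simp add: h_def i_def ds_def g_def algebra_simps power2_eq_square)
    finally show ?thesis .
  qed
  have "AE \<omega> in M. real_cond_exp M (FF j) f \<omega> = g \<omega>"
  proof (rule fms.real_cond_exp_charact)
    fix A assume "A \<in> sets (FF j)"
    then show "(\<integral>\<omega>\<in>A. f \<omega> \<partial>M) = (\<integral>\<omega>\<in>A. g \<omega> \<partial>M)"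
      using key unfolding set_lebesgue_integral_def by simp
  qed (use int_f int_g g_meas in auto)
  then show ?thesis unfolding g_def .
qed

end

lemma powr_step:
  fixes x mu :: real
  assumes x: "1 \<le> x" and mu: "0 \<le> mu"
  shows "x powr (1+mu) + (1+mu) * x powr mu \<le> (x+1) powr (1+mu)"
proof -
  have der: "DERIV (\<lambda>t. t powr (1+mu)) t :> (1+mu) * t powr mu" if "x \<le> t" for t
  proof -
    have "t > 0" using that x by simp
    from has_real_derivative_powr[OF this, of "1+mu"] show ?thesis by simp
  qed
  obtain z where z: "x < z" "z < x + 1" "(x+1) powr (1+mu) - x powr (1+mu) = ((x+1) - x) * ((1+mu) * z powr mu)"
    using MVT2[of x "x+1" "\<lambda>t. t powr (1+mu)" "\<lambda>t. (1+mu) * t powr mu"] der by auto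
  have "x powr mu \<le> z powr mu" using z x mu by (intro powr_mono2) auto
  then have "(1+mu) * x powr mu \<le> (1+mu) * z powr mu" using mu by (intro mult_left_mono) auto
  then show ?thesis using z by simp
qed

lemma seq_bound:
  fixes q :: "nat \<Rightarrow> real" and mu c K :: real
  assumes mu: "0 \<le> mu" "mu < 1" and c: "0 \<le> c"
    and rec: "\<And>n. 1 \<le> n \<Longrightarrow> q (Suc n) \<le> (1 + 2 * mu / real n) * q n + c"
    and q1: "q 1 \<le> K" and K: "c / (1 - mu) \<le> K"
  shows "1 \<le> n \<Longrightarrow> q n \<le> K * real n powr (1 + mu)"
proof (induction n rule: nat_induct_at_least)
  case base then show ?case using q1 by simp
next
  case (Suc n)
  have n: "1 \<le> real n" using Suc by simp
  have K0: "0 \<le> K" using K c mu by (smt (verit) divide_nonneg_pos)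
  have cK: "c \<le> K * (1 - mu)" using K mu by (simp add: divide_le_eq mult.commute)
  have pw: "real n powr (1 + mu) = real n * real n powr mu" using n by (simp add: powr_add)
  have p1: "1 \<le> real n powr mu" using n mu by (simp add: ge_one_powr_ge_zero)
  have "q (Suc n) \<le> (1 + 2 * mu / real n) * q n + c" by (rule rec[OF Suc(1)])
  also have "\<dots> \<le> (1 + 2 * mu / real n) * (K * real n powr (1 + mu)) + c"
    using Suc.IH mu n by (intro add_right_mono mult_left_mono) auto
  also have "(1 + 2 * mu / real n) * (K * real n powr (1 + mu)) = K * real n powr (1 + mu) + 2 * mu * K * real n powr mu"
    using n unfolding pw by (simp add: field_simps)
  also have "c \<le> K * (1 - mu) * real n powr mu"
    using cK p1 K0 mu by (smt (verit) mult_le_cancel_left1 mult_nonneg_nonneg)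
  then have "K * real n powr (1 + mu) + 2 * mu * K * real n powr mu + c \<le> K * (real n powr (1 + mu) + (1 + mu) * real n powr mu)"
    by (simp add: algebra_simps)
  also have "\<dots> \<le> K * (real n + 1) powr (1 + mu)"
    using powr_step[OF n mu(1)] K0 by (intro mult_left_mono) auto
  finally show ?case by (simp add: add.commute)
qed

lemma cross_bound:
  fixes a1 a2 s t :: real
  shows "(\<bar>a2\<bar> * a1 + \<bar>a1\<bar> * a2) * (s * t) \<le> (if a1 * a2 > 0 then sqrt (a1 * a2) else 0) * (\<bar>a2\<bar> * s\<^sup>2 + \<bar>a1\<bar> * t\<^sup>2)"
proof (cases "a1 * a2 > 0")
  case True
  define u where "u = sqrt \<bar>a2\<bar> * \<bar>s\<bar>"
  define v where "v = sqrt \<bar>a1\<bar> * \<bar>t\<bar>"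
  have uu: "u\<^sup>2 = \<bar>a2\<bar> * s\<^sup>2" unfolding u_def by (simp add: power_mult_distrib)
  have vv: "v\<^sup>2 = \<bar>a1\<bar> * t\<^sup>2" unfolding v_def by (simp add: power_mult_distrib)
  have sq: "sqrt (a1 * a2) = sqrt \<bar>a1\<bar> * sqrt \<bar>a2\<bar>" using True
    by (metis abs_mult abs_of_pos real_sqrt_mult)
  have uv: "u * v = sqrt (a1 * a2) * \<bar>s * t\<bar>" unfolding u_def v_def sq by (simp add: abs_mult)
  have "2 * u * v \<le> u\<^sup>2 + v\<^sup>2" by (rule sum_squares_bound)
  then have A: "2 * sqrt (a1 * a2) * \<bar>s * t\<bar> \<le> \<bar>a2\<bar> * s\<^sup>2 + \<bar>a1\<bar> * t\<^sup>2" using uu vv uv by simp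
  have "(a1 > 0 \<and> a2 > 0) \<or> (a1 < 0 \<and> a2 < 0)" using True by (simp add: zero_less_mult_iff)
  then have B: "\<bar>\<bar>a2\<bar> * a1 + \<bar>a1\<bar> * a2\<bar> = 2 * (a1 * a2)"
  proof
    assume "a1 > 0 \<and> a2 > 0" then show ?thesis by simp
  next
    assume h: "a1 < 0 \<and> a2 < 0"
    then have "\<bar>a2\<bar> * a1 + \<bar>a1\<bar> * a2 = - (2 * (a1 * a2))" by simp
    moreover have "0 < a1 * a2" using h by (simp add: mult_neg_neg)
    ultimately show ?thesis by simp
  qed
  have C: "a1 * a2 = sqrt (a1 * a2) * sqrt (a1 * a2)" using True by simp
  have "(\<bar>a2\<bar> * a1 + \<bar>a1\<bar> * a2) * (s * t) \<le> \<bar>\<bar>a2\<bar> * a1 + \<bar>a1\<bar> * a2\<bar> * \<bar>s * t\<bar>"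
    by (metis abs_ge_self abs_mult)
  also have "\<dots> = sqrt (a1 * a2) * (2 * sqrt (a1 * a2) * \<bar>s * t\<bar>)" unfolding B by (subst C) simp
  also have "\<dots> \<le> sqrt (a1 * a2) * (\<bar>a2\<bar> * s\<^sup>2 + \<bar>a1\<bar> * t\<^sup>2)"
    by (rule mult_left_mono[OF A]) (use True in simp)
  finally show ?thesis using True by simp
next
  case False
  then have "\<bar>a2\<bar> * a1 + \<bar>a1\<bar> * a2 = 0"
    by (cases "a1 \<ge> 0"; cases "a2 \<ge> 0") (auto simp: mult_pos_pos mult_neg_neg not_less zero_less_mult_iff)
  then show ?thesis using False by simp
qed

lemma lip_sum:
  fixes s :: "nat \<Rightarrow> real"
  assumes "\<And>n. \<bar>s (Suc n) - s n\<bar> \<le> 1"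
  shows "j \<le> n \<Longrightarrow> \<bar>s n - s j\<bar> \<le> real (n - j)"
proof (induction n)
  case 0 then show ?case by simp
next
  case (Suc n)
  show ?case
  proof (cases "j = Suc n")
    case False
    then have "j \<le> n" using Suc by simp
    then have "\<bar>s n - s j\<bar> \<le> real (n - j)" by (rule Suc.IH)
    moreover have "real (Suc n - j) = real (n - j) + 1" using \<open>j \<le> n\<close> by simp
    ultimately show ?thesis using assms[of n] by linarith
  qed simp
qed

lemma DET:
  fixes s :: "nat \<Rightarrow> real" and m :: nat
  assumes lip: "\<And>n. \<bar>s (Suc n) - s n\<bar> \<le> 1" and m: "1 \<le> m"
    and sub: "(\<lambda>k. s (Suc k ^ m) / real (Suc k ^ m)) \<longlonglongrightarrow> 0"
  shows "(\<lambda>n. s n / real n) \<longlonglongrightarrow> 0"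
proof (rule LIMSEQ_I)
  fix r :: real assume r: "0 < r"
  define N where "N = (\<lambda>k::nat. Suc k ^ m)"
  have Npos: "0 < N k" for k unfolding N_def by simp
  have Nge: "k < N k" for k
  proof -
    have "Suc k \<le> Suc k ^ m" using m by (metis One_nat_def Suc_le_eq le_add2 power_increasing_iff power_one_right zero_less_Suc add_Suc_right add_0_right le_SucI one_le_power self_le_power)
    then show ?thesis unfolding N_def by simp
  qed
  have Nmono: "N k \<le> N l" if "k \<le> l" for k l unfolding N_def using that by (simp add: power_mono)
  have ratio: "(\<lambda>k. (real (N (Suc k)) - real (N k)) / real (N k)) \<longlonglongrightarrow> 0"
  proof -
    have e: "(real (N (Suc k)) - real (N k)) / real (N k) = (1 + 1 / real (Suc k)) ^ m - 1" for k
    proof -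
      have "real (N (Suc k)) = (real (Suc k) + 1) ^ m" unfolding N_def by simp
      also have "\<dots> = real (Suc k) ^ m * (1 + 1 / real (Suc k)) ^ m"
        by (simp add: power_mult_distrib[symmetric] field_simps)
      finally have "real (N (Suc k)) = real (N k) * (1 + 1 / real (Suc k)) ^ m" unfolding N_def by simp
      then show ?thesis using Npos[of k] by (simp add: field_simps)
    qed
    have "(\<lambda>k. 1 / real (Suc k)) \<longlonglongrightarrow> 0" using LIMSEQ_inverse_real_of_nat by (simp add: inverse_eq_divide)
    then have "(\<lambda>k. (1 + 1 / real (Suc k)) ^ m - 1) \<longlonglongrightarrow> (1 + 0) ^ m - 1"
      by (intro tendsto_intros)
    then show ?thesis unfolding e by simp
  qed
  have sub': "(\<lambda>k. \<bar>s (N k) / real (N k)\<bar>) \<longlonglongrightarrow> 0" using tendsto_rabs_zero[OF sub] unfolding N_def by simp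
  have "\<forall>\<^sub>F k in sequentially. \<bar>s (N k) / real (N k)\<bar> < r / 2"
    by (rule order_tendstoD(2)[OF sub']) (use r in simp)
  moreover have "\<forall>\<^sub>F k in sequentially. (real (N (Suc k)) - real (N k)) / real (N k) < r / 2"
    using order_tendstoD(2)[OF ratio, of "r/2"] r by simp
  ultimately have "\<forall>\<^sub>F k in sequentially. \<bar>s (N k) / real (N k)\<bar> < r / 2 \<and> (real (N (Suc k)) - real (N k)) / real (N k) < r / 2"
    by eventually_elim auto
  then obtain k0 where k0: "\<And>k. k0 \<le> k \<Longrightarrow> \<bar>s (N k) / real (N k)\<bar> < r / 2 \<and> (real (N (Suc k)) - real (N k)) / real (N k) < r / 2"
    unfolding eventually_sequentially by blast
  show "\<exists>no. \<forall>n\<ge>no. norm (s n / real n - 0) < r"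
  proof (intro exI allI impI)
    fix n assume n: "N k0 \<le> n"
    define K where "K = {k. N k \<le> n}"
    have finK: "finite K" unfolding K_def using Nge by (metis (no_types, lifting) finite_nat_set_iff_bounded mem_Collect_eq order.strict_trans2)
    have k0K: "k0 \<in> K" unfolding K_def using n by simp
    define k where "k = Max K"
    have kK: "k \<in> K" unfolding k_def using finK k0K by (intro Max_in) auto
    have kk0: "k0 \<le> k" unfolding k_def using finK k0K by simp
    have Nk: "N k \<le> n" using kK unfolding K_def by simp
    have Nk1: "n < N (Suc k)"
    proof (rule ccontr)
      assume "\<not> n < N (Suc k)"
      then have "Suc k \<in> K" unfolding K_def by simp
      then have "Suc k \<le> k" unfolding k_def using finK by simp
      then show False by simp
    qed
    have Nkp: "0 < real (N k)" using Npos[of k] by simp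
    have "\<bar>s n - s (N k)\<bar> \<le> real (n - N k)" by (rule lip_sum[where s=s, OF lip Nk])
    also have "\<dots> \<le> real (N (Suc k)) - real (N k)" using Nk Nk1 by simp
    finally have "\<bar>s n\<bar> \<le> \<bar>s (N k)\<bar> + (real (N (Suc k)) - real (N k))" by linarith
    then have "\<bar>s n\<bar> / real (N k) \<le> \<bar>s (N k)\<bar> / real (N k) + (real (N (Suc k)) - real (N k)) / real (N k)"
      using Nkp by (simp add: divide_right_mono add_divide_distrib[symmetric])
    also have "\<dots> < r"
    proof -
      have a: "\<bar>s (N k)\<bar> / real (N k) < r / 2" using k0[OF kk0] Nkp by (simp add: abs_divide)
      have b: "(real (N (Suc k)) - real (N k)) / real (N k) < r / 2" using k0[OF kk0] by blast
      from a b show ?thesis by linarith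
    qed
    finally have A: "\<bar>s n\<bar> / real (N k) < r" .
    have "\<bar>s n\<bar> / real n \<le> \<bar>s n\<bar> / real (N k)"
      using Nk Nkp by (intro divide_left_mono) auto
    then show "norm (s n / real n - 0) < r" using A by (simp add: abs_divide)
  qed
qed

context ew begin

definition "Q n \<omega> = \<bar>2*p2-1\<bar> * (S1 n \<omega>)\<^sup>2 + \<bar>2*p1-1\<bar> * (S2 n \<omega>)\<^sup>2"
definition "mu = (if (2*p1-1)*(2*p2-1) > 0 then sqrt ((2*p1-1)*(2*p2-1)) else 0)"

lemma S_Suc: "S1 (Suc n) \<omega> = S1 n \<omega> + X1 (Suc n) \<omega>" "S2 (Suc n) \<omega> = S2 n \<omega> + X2 (Suc n) \<omega>"
  unfolding S1_def S2_def by simp_all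

lemma S_1: "S1 1 \<omega> = real_of_int a" "S2 1 \<omega> = real_of_int b"
  unfolding S1_def S2_def X1_def X2_def by (simp_all add: ew_step_def)

lemma SB: "AE \<omega> in M. \<bar>S1 n \<omega>\<bar> \<le> real n \<and> \<bar>S2 n \<omega>\<bar> \<le> real n"
  using AE_good by eventually_elim (use good_Sabs in auto)

lemma int_S1S2: "integrable M (\<lambda>\<omega>. S1 n \<omega> * S2 n \<omega>)"
proof (rule intb[where B="real n * real n"])
  show "AE \<omega> in M. \<bar>S1 n \<omega> * S2 n \<omega>\<bar> \<le> real n * real n"
    using SB[of n] by eventually_elim (simp only: abs_mult, rule mult_mono, auto)
qed measurable

lemma int_Ssq: "integrable M (\<lambda>\<omega>. (S1 n \<omega>)\<^sup>2)" "integrable M (\<lambda>\<omega>. (S2 n \<omega>)\<^sup>2)"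
proof -
  show "integrable M (\<lambda>\<omega>. (S1 n \<omega>)\<^sup>2)"
  proof (rule intb[where B="real n * real n"])
    show "AE \<omega> in M. \<bar>(S1 n \<omega>)\<^sup>2\<bar> \<le> real n * real n"
      using SB[of n] by eventually_elim (simp only: power2_eq_square abs_mult, rule mult_mono, auto)
  qed measurable
  show "integrable M (\<lambda>\<omega>. (S2 n \<omega>)\<^sup>2)"
  proof (rule intb[where B="real n * real n"])
    show "AE \<omega> in M. \<bar>(S2 n \<omega>)\<^sup>2\<bar> \<le> real n * real n"
      using SB[of n] by eventually_elim (simp only: power2_eq_square abs_mult, rule mult_mono, auto)
  qed measurable
qed

lemma int_Q: "integrable M (Q n)"
  unfolding Q_def using int_Ssq by (intro Bochner_Integration.integrable_add integrable_mult_right) auto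

lemma int_SX: "integrable M (\<lambda>\<omega>. S1 n \<omega> * X1 (Suc n) \<omega>)" "integrable M (\<lambda>\<omega>. S2 n \<omega> * X2 (Suc n) \<omega>)"
proof -
  show "integrable M (\<lambda>\<omega>. S1 n \<omega> * X1 (Suc n) \<omega>)"
  proof (rule intb[where B="real n"])
    show "AE \<omega> in M. \<bar>S1 n \<omega> * X1 (Suc n) \<omega>\<bar> \<le> real n"
      using SB[of n] AE_good by eventually_elim (rule abs_mult_le1, auto intro: good_Xabs)
  qed measurable
  show "integrable M (\<lambda>\<omega>. S2 n \<omega> * X2 (Suc n) \<omega>)"
  proof (rule intb[where B="real n"])
    show "AE \<omega> in M. \<bar>S2 n \<omega> * X2 (Suc n) \<omega>\<bar> \<le> real n"
      using SB[of n] AE_good by eventually_elim (rule abs_mult_le1, auto intro: good_Xabs)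
  qed measurable
qed

lemma E_S1sq_step:
  assumes n: "1 \<le> n"
  shows "(\<integral>\<omega>. (S1 (Suc n) \<omega>)\<^sup>2 \<partial>M) = (\<integral>\<omega>. (S1 n \<omega>)\<^sup>2 \<partial>M) + 2 * ((2*p1-1) / real n * (\<integral>\<omega>. S1 n \<omega> * S2 n \<omega> \<partial>M)) + 1"
proof -
  have "(\<integral>\<omega>. (S1 (Suc n) \<omega>)\<^sup>2 \<partial>M) = (\<integral>\<omega>. (S1 n \<omega>)\<^sup>2 + 2 * (S1 n \<omega> * X1 (Suc n) \<omega>) + 1 \<partial>M)"
  proof (rule integral_cong_AE)
    show "AE \<omega> in M. (S1 (Suc n) \<omega>)\<^sup>2 = (S1 n \<omega>)\<^sup>2 + 2 * (S1 n \<omega> * X1 (Suc n) \<omega>) + 1"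
      using AE_good by eventually_elim (simp add: S_Suc power2_sum good_Xsq)
  qed measurable
  also have "\<dots> = (\<integral>\<omega>. (S1 n \<omega>)\<^sup>2 \<partial>M) + 2 * (\<integral>\<omega>. S1 n \<omega> * X1 (Suc n) \<omega> \<partial>M) + 1"
    using int_Ssq int_SX by (simp add: prob_space)
  also have "(\<integral>\<omega>. S1 n \<omega> * X1 (Suc n) \<omega> \<partial>M) = (2*p1-1) / real n * (\<integral>\<omega>. S1 n \<omega> * S2 n \<omega> \<partial>M)"
  proof (rule CL1[OF n S_meas_VA(1)[OF order_refl]])
    show "AE \<omega> in M. \<bar>S1 n \<omega>\<bar> \<le> real n" using SB[of n] by eventually_elim auto
  qed
  finally show ?thesis .
qed

lemma E_S2sq_step:
  assumes n: "1 \<le> n"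
  shows "(\<integral>\<omega>. (S2 (Suc n) \<omega>)\<^sup>2 \<partial>M) = (\<integral>\<omega>. (S2 n \<omega>)\<^sup>2 \<partial>M) + 2 * ((2*p2-1) / real n * (\<integral>\<omega>. S1 n \<omega> * S2 n \<omega> \<partial>M)) + 1"
proof -
  have "(\<integral>\<omega>. (S2 (Suc n) \<omega>)\<^sup>2 \<partial>M) = (\<integral>\<omega>. (S2 n \<omega>)\<^sup>2 + 2 * (S2 n \<omega> * X2 (Suc n) \<omega>) + 1 \<partial>M)"
  proof (rule integral_cong_AE)
    show "AE \<omega> in M. (S2 (Suc n) \<omega>)\<^sup>2 = (S2 n \<omega>)\<^sup>2 + 2 * (S2 n \<omega> * X2 (Suc n) \<omega>) + 1"
      using AE_good by eventually_elim (simp add: S_Suc power2_sum good_Xsq)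
  qed measurable
  also have "\<dots> = (\<integral>\<omega>. (S2 n \<omega>)\<^sup>2 \<partial>M) + 2 * (\<integral>\<omega>. S2 n \<omega> * X2 (Suc n) \<omega> \<partial>M) + 1"
    using int_Ssq int_SX by (simp add: prob_space)
  also have "(\<integral>\<omega>. S2 n \<omega> * X2 (Suc n) \<omega> \<partial>M) = (2*p2-1) / real n * (\<integral>\<omega>. S2 n \<omega> * S1 n \<omega> \<partial>M)"
  proof (rule CL2[OF n S_meas_VA(2)[OF order_refl]])
    show "AE \<omega> in M. \<bar>S2 n \<omega>\<bar> \<le> real n" using SB[of n] by eventually_elim auto
  qed
  finally show ?thesis by (simp add: mult.commute)
qed

lemma q_rec:
  assumes n: "1 \<le> n"
  shows "(\<integral>\<omega>. Q (Suc n) \<omega> \<partial>M) \<le> (1 + 2 * mu / real n) * (\<integral>\<omega>. Q n \<omega> \<partial>M) + 2"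
proof -
  let ?a1 = "2*p1-1" and ?a2 = "2*p2-1"
  let ?E = "\<integral>\<omega>. S1 n \<omega> * S2 n \<omega> \<partial>M"
  have a: "\<bar>?a1\<bar> \<le> 1" "\<bar>?a2\<bar> \<le> 1" using p1 p2 by auto
  have IQ: "(\<integral>\<omega>. Q m \<omega> \<partial>M) = \<bar>?a2\<bar> * (\<integral>\<omega>. (S1 m \<omega>)\<^sup>2 \<partial>M) + \<bar>?a1\<bar> * (\<integral>\<omega>. (S2 m \<omega>)\<^sup>2 \<partial>M)" for m
    unfolding Q_def using int_Ssq by simp
  have eq: "(\<integral>\<omega>. Q (Suc n) \<omega> \<partial>M) = (\<integral>\<omega>. Q n \<omega> \<partial>M) + 2 / real n * ((\<bar>?a2\<bar> * ?a1 + \<bar>?a1\<bar> * ?a2) * ?E) + (\<bar>?a1\<bar> + \<bar>?a2\<bar>)"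
    unfolding IQ E_S1sq_step[OF n] E_S2sq_step[OF n]
  proof -
    fix A1 A2 B1 B2 E :: real
    show "\<bar>?a2\<bar> * (A1 + 2 * (?a1 / real n * E) + 1) + \<bar>?a1\<bar> * (A2 + 2 * (?a2 / real n * E) + 1) =
       \<bar>?a2\<bar> * A1 + \<bar>?a1\<bar> * A2 + 2 / real n * ((\<bar>?a2\<bar> * ?a1 + \<bar>?a1\<bar> * ?a2) * E) + (\<bar>?a1\<bar> + \<bar>?a2\<bar>)"
      using n by (simp add: field_simps)
  qed
  have "(\<bar>?a2\<bar> * ?a1 + \<bar>?a1\<bar> * ?a2) * ?E = (\<integral>\<omega>. (\<bar>?a2\<bar> * ?a1 + \<bar>?a1\<bar> * ?a2) * (S1 n \<omega> * S2 n \<omega>) \<partial>M)"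
    by simp
  also have "\<dots> \<le> (\<integral>\<omega>. mu * Q n \<omega> \<partial>M)"
  proof (rule integral_mono)
    show "integrable M (\<lambda>\<omega>. (\<bar>?a2\<bar> * ?a1 + \<bar>?a1\<bar> * ?a2) * (S1 n \<omega> * S2 n \<omega>))"
      using int_S1S2 by simp
    show "integrable M (\<lambda>\<omega>. mu * Q n \<omega>)" using int_Q by simp
    fix \<omega> show "(\<bar>?a2\<bar> * ?a1 + \<bar>?a1\<bar> * ?a2) * (S1 n \<omega> * S2 n \<omega>) \<le> mu * Q n \<omega>"
      unfolding mu_def Q_def by (rule cross_bound)
  qed
  also have "\<dots> = mu * (\<integral>\<omega>. Q n \<omega> \<partial>M)" by simp
  finally have c: "(\<bar>?a2\<bar> * ?a1 + \<bar>?a1\<bar> * ?a2) * ?E \<le> mu * (\<integral>\<omega>. Q n \<omega> \<partial>M)" .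
  have "2 / real n * ((\<bar>?a2\<bar> * ?a1 + \<bar>?a1\<bar> * ?a2) * ?E) \<le> 2 / real n * (mu * (\<integral>\<omega>. Q n \<omega> \<partial>M))"
    using n by (intro mult_left_mono c) auto
  then show ?thesis unfolding eq using a by (simp add: algebra_simps)
qed

lemma mu_nonneg: "0 \<le> mu" unfolding mu_def by auto

lemma q_bound:
  assumes mu1: "mu < 1" and n: "1 \<le> n"
  shows "(\<integral>\<omega>. Q n \<omega> \<partial>M) \<le> max 2 (2 / (1 - mu)) * real n powr (1 + mu)"
proof (rule seq_bound[where q="\<lambda>n. \<integral>\<omega>. Q n \<omega> \<partial>M" and c=2, OF mu_nonneg mu1 _ q_rec _ _ n])
  have a: "\<bar>2*p1-1\<bar> \<le> 1" "\<bar>2*p2-1\<bar> \<le> 1" using p1 p2 by auto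
  have "(\<integral>\<omega>. Q 1 \<omega> \<partial>M) = \<bar>2*p2-1\<bar> + \<bar>2*p1-1\<bar>"
    unfolding Q_def S_1 using ab by (auto simp: prob_space)
  then show "(\<integral>\<omega>. Q 1 \<omega> \<partial>M) \<le> max 2 (2 / (1 - mu))" using a by simp
qed auto

end

lemma (in prob_space) BC_lemma:
  fixes Y :: "nat \<Rightarrow> 'a \<Rightarrow> real" and C s :: real
  assumes meas: "\<And>k. Y k \<in> borel_measurable M" and nn: "\<And>k \<omega>. 0 \<le> Y k \<omega>"
    and int: "\<And>k. integrable M (Y k)"
    and bnd: "\<And>k. (\<integral>\<omega>. Y k \<omega> \<partial>M) \<le> C * real (Suc k) powr s" and s: "s < -1"
  shows "AE \<omega> in M. (\<lambda>k. Y k \<omega>) \<longlonglongrightarrow> 0"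
proof -
  have ev: "AE \<omega> in M. eventually (\<lambda>k. Y k \<omega> < 1 / real (Suc i)) sequentially" for i
  proof -
    define e where "e = 1 / real (Suc i)"
    have e: "0 < e" unfolding e_def by simp
    define A where "A = (\<lambda>k. {\<omega>\<in>space M. e \<le> Y k \<omega>})"
    have A_sets: "A k \<in> sets M" for k unfolding A_def using meas[of k] by measurable
    have mA: "measure M (A k) \<le> C / e * real (Suc k) powr s" for k
    proof -
      have "measure M (A k) \<le> (\<integral>\<omega>. Y k \<omega> \<partial>M) / e"
        unfolding A_def by (rule integral_Markov_inequality_measure[OF int sets.top _ e]) (use nn in auto)
      also have "\<dots> \<le> C * real (Suc k) powr s / e" using bnd[of k] e by (simp add: divide_right_mono)
      finally show ?thesis by simp
    qed
    have sum: "summable (\<lambda>k. C / e * real (Suc k) powr s)"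
    proof -
      have "summable (\<lambda>k. real k powr s)" using s by (simp add: summable_real_powr_iff)
      then have "summable (\<lambda>k. real (Suc k) powr s)" by (subst summable_Suc_iff)
      then show ?thesis by (rule summable_mult)
    qed
    have "summable (\<lambda>k. measure M (A k))"
      by (rule summable_comparison_test'[OF sum]) (use mA in simp)
    from borel_cantelli_AE1[OF A_sets _ this]
    have "AE \<omega> in M. eventually (\<lambda>k. \<omega> \<in> space M - A k) sequentially"
      by (simp add: less_top[symmetric])
    then show ?thesis
    proof (rule AE_mp[OF _ AE_I2])
      fix \<omega> assume "\<omega> \<in> space M"
      then show "eventually (\<lambda>k. \<omega> \<in> space M - A k) sequentially \<longrightarrow> eventually (\<lambda>k. Y k \<omega> < 1 / real (Suc i)) sequentially"
        by (auto simp: A_def e_def elim!: eventually_mono)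
    qed
  qed
  then have "AE \<omega> in M. \<forall>i. eventually (\<lambda>k. Y k \<omega> < 1 / real (Suc i)) sequentially"
    by (simp add: AE_all_countable)
  then show ?thesis
  proof (rule AE_mp[OF _ AE_I2], intro impI)
    fix \<omega> assume ev: "\<forall>i. eventually (\<lambda>k. Y k \<omega> < 1 / real (Suc i)) sequentially"
    show "(\<lambda>k. Y k \<omega>) \<longlonglongrightarrow> 0"
    proof (rule order_tendstoI)
      fix a :: real assume a0: "a < 0"
      show "eventually (\<lambda>k. a < Y k \<omega>) sequentially"
        by (rule always_eventually) (use nn a0 in \<open>auto intro: less_le_trans\<close>)
    next
      fix a :: real assume a: "0 < a"
      obtain i where i: "1 / real (Suc i) < a"
        using reals_Archimedean a by (metis inverse_eq_divide of_nat_Suc)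
      show "eventually (\<lambda>k. Y k \<omega> < a) sequentially"
        using ev[rule_format, of i] by eventually_elim (use i in linarith)
    qed
  qed
qed

context ew begin

lemma Y_bound:
  assumes mu1: "mu < 1" and a2: "2*p2-1 \<noteq> 0" and n: "1 \<le> n"
  shows "(\<integral>\<omega>. (S1 n \<omega> / real n)\<^sup>2 \<partial>M) \<le> max 2 (2 / (1 - mu)) / \<bar>2*p2-1\<bar> * real n powr (mu - 1)"
proof -
  let ?K = "max 2 (2 / (1 - mu))" and ?w = "\<bar>2*p2-1\<bar>"
  have w: "0 < ?w" using a2 by simp
  have n0: "0 < real n" using n by simp
  have "(\<integral>\<omega>. (S1 n \<omega> / real n)\<^sup>2 \<partial>M) \<le> (\<integral>\<omega>. Q n \<omega> / (?w * (real n)\<^sup>2) \<partial>M)"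
  proof (rule integral_mono)
    show "integrable M (\<lambda>\<omega>. (S1 n \<omega> / real n)\<^sup>2)"
      using int_Ssq(1)[of n] by (simp add: power_divide)
    show "integrable M (\<lambda>\<omega>. Q n \<omega> / (?w * (real n)\<^sup>2))" using int_Q[of n] by simp
    fix \<omega>
    have "?w * (S1 n \<omega>)\<^sup>2 \<le> Q n \<omega>" unfolding Q_def by simp
    then show "(S1 n \<omega> / real n)\<^sup>2 \<le> Q n \<omega> / (?w * (real n)\<^sup>2)"
      using w n0 by (simp add: power_divide field_simps)
  qed
  also have "\<dots> = (\<integral>\<omega>. Q n \<omega> \<partial>M) / (?w * (real n)\<^sup>2)" by simp
  also have "\<dots> \<le> ?K * real n powr (1 + mu) / (?w * (real n)\<^sup>2)"
    using q_bound[OF mu1 n] w n0 by (intro divide_right_mono) auto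
  also have "\<dots> = ?K / ?w * (real n powr (1 + mu) / real n powr 2)"
    using n0 by (simp add: powr_realpow)
  also have "real n powr (1 + mu) / real n powr 2 = real n powr (mu - 1)"
  proof -
    have e: "1 + mu - 2 = mu - 1" by simp
    show ?thesis using powr_diff[of "real n" "1 + mu" 2] unfolding e by (rule sym)
  qed
  finally show ?thesis .
qed

lemma Y_bound2:
  assumes mu1: "mu < 1" and a1: "2*p1-1 \<noteq> 0" and n: "1 \<le> n"
  shows "(\<integral>\<omega>. (S2 n \<omega> / real n)\<^sup>2 \<partial>M) \<le> max 2 (2 / (1 - mu)) / \<bar>2*p1-1\<bar> * real n powr (mu - 1)"
proof -
  let ?K = "max 2 (2 / (1 - mu))" and ?w = "\<bar>2*p1-1\<bar>"
  have w: "0 < ?w" using a1 by simp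
  have n0: "0 < real n" using n by simp
  have "(\<integral>\<omega>. (S2 n \<omega> / real n)\<^sup>2 \<partial>M) \<le> (\<integral>\<omega>. Q n \<omega> / (?w * (real n)\<^sup>2) \<partial>M)"
  proof (rule integral_mono)
    show "integrable M (\<lambda>\<omega>. (S2 n \<omega> / real n)\<^sup>2)"
      using int_Ssq(2)[of n] by (simp add: power_divide)
    show "integrable M (\<lambda>\<omega>. Q n \<omega> / (?w * (real n)\<^sup>2))" using int_Q[of n] by simp
    fix \<omega>
    have "?w * (S2 n \<omega>)\<^sup>2 \<le> Q n \<omega>" unfolding Q_def by simp
    then show "(S2 n \<omega> / real n)\<^sup>2 \<le> Q n \<omega> / (?w * (real n)\<^sup>2)"
      using w n0 by (simp add: power_divide field_simps)
  qed
  also have "\<dots> = (\<integral>\<omega>. Q n \<omega> \<partial>M) / (?w * (real n)\<^sup>2)" by simp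
  also have "\<dots> \<le> ?K * real n powr (1 + mu) / (?w * (real n)\<^sup>2)"
    using q_bound[OF mu1 n] w n0 by (intro divide_right_mono) auto
  also have "\<dots> = ?K / ?w * (real n powr (1 + mu) / real n powr 2)"
    using n0 by (simp add: powr_realpow)
  also have "real n powr (1 + mu) / real n powr 2 = real n powr (mu - 1)"
  proof -
    have e: "1 + mu - 2 = mu - 1" by simp
    show ?thesis using powr_diff[of "real n" "1 + mu" 2] unfolding e by (rule sym)
  qed
  finally show ?thesis .
qed

end

lemma sq_to_zero: "(\<lambda>k. (f k)\<^sup>2) \<longlonglongrightarrow> 0 \<Longrightarrow> (\<lambda>k. f k :: real) \<longlonglongrightarrow> 0"
proof -
  assume h: "(\<lambda>k. (f k)\<^sup>2) \<longlonglongrightarrow> 0"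
  have "(\<lambda>k. sqrt ((f k)\<^sup>2)) \<longlonglongrightarrow> sqrt 0" by (rule tendsto_real_sqrt[OF h])
  then have "(\<lambda>k. \<bar>f k\<bar>) \<longlonglongrightarrow> 0" by simp
  then show ?thesis by (simp add: tendsto_rabs_zero_iff)
qed

context ew begin

lemma SLLN_one:
  fixes T :: "nat \<Rightarrow> 'a \<Rightarrow> real" and C :: real
  assumes mu1: "mu < 1"
    and Tm: "\<And>n. T n \<in> borel_measurable M" and Tint: "\<And>n. integrable M (\<lambda>\<omega>. (T n \<omega> / real n)\<^sup>2)"
    and Tb: "\<And>n. 1 \<le> n \<Longrightarrow> (\<integral>\<omega>. (T n \<omega> / real n)\<^sup>2 \<partial>M) \<le> C * real n powr (mu - 1)"
    and C: "0 \<le> C"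
    and lip: "AE \<omega> in M. \<forall>n. \<bar>T (Suc n) \<omega> - T n \<omega>\<bar> \<le> 1"
  shows "AE \<omega> in M. (\<lambda>n. T n \<omega> / real n) \<longlonglongrightarrow> 0"
proof -
  define m where "m = nat \<lceil>2 / (1 - mu)\<rceil>"
  have mu0: "0 \<le> mu" by (rule mu_nonneg)
  have m2: "2 / (1 - mu) \<le> real m" unfolding m_def by linarith
  have m1: "1 \<le> m"
  proof -
    have "2 \<le> 2 / (1 - mu)" using mu0 mu1 by (simp add: le_divide_eq)
    then show ?thesis using m2 by linarith
  qed
  have ms: "real m * (mu - 1) \<le> -2"
  proof -
    have "2 \<le> real m * (1 - mu)" using m2 mu1 by (simp add: divide_le_eq)
    then show ?thesis by (simp add: algebra_simps)
  qed
  define Y where "Y = (\<lambda>k \<omega>. (T (Suc k ^ m) \<omega> / real (Suc k ^ m))\<^sup>2)"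
  have "AE \<omega> in M. (\<lambda>k. Y k \<omega>) \<longlonglongrightarrow> 0"
  proof (rule BC_lemma[where C=C and s="real m * (mu - 1)"])
    show "Y k \<in> borel_measurable M" for k unfolding Y_def using Tm by measurable
    show "0 \<le> Y k \<omega>" for k \<omega> unfolding Y_def by simp
    show "integrable M (Y k)" for k unfolding Y_def by (rule Tint)
    show "real m * (mu - 1) < -1" using ms by simp
    fix k
    have "(\<integral>\<omega>. Y k \<omega> \<partial>M) \<le> C * real (Suc k ^ m) powr (mu - 1)"
      unfolding Y_def by (rule Tb) simp
    also have "real (Suc k ^ m) powr (mu - 1) = real (Suc k) powr (real m * (mu - 1))"
    proof -
      have "real (Suc k ^ m) = real (Suc k) powr real m" by (simp add: powr_realpow)
      then show ?thesis by (simp add: powr_powr)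
    qed
    finally show "(\<integral>\<omega>. Y k \<omega> \<partial>M) \<le> C * real (Suc k) powr (real m * (mu - 1))" .
  qed
  then show ?thesis using lip
  proof eventually_elim
    case (elim \<omega>)
    show ?case
    proof (rule DET[OF _ m1])
      show "\<bar>T (Suc n) \<omega> - T n \<omega>\<bar> \<le> 1" for n using elim(2) by simp
      show "(\<lambda>k. T (Suc k ^ m) \<omega> / real (Suc k ^ m)) \<longlonglongrightarrow> 0"
        by (rule sq_to_zero) (use elim(1) in \<open>simp add: Y_def\<close>)
    qed
  qed
qed

lemma SLLN:
  assumes mu1: "mu < 1" and a1: "2*p1-1 \<noteq> 0" and a2: "2*p2-1 \<noteq> 0"
  shows "AE \<omega> in M. (\<lambda>n. S1 n \<omega> / real n) \<longlonglongrightarrow> 0 \<and> (\<lambda>n. S2 n \<omega> / real n) \<longlonglongrightarrow> 0"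
proof -
  have A: "AE \<omega> in M. (\<lambda>n. S1 n \<omega> / real n) \<longlonglongrightarrow> 0"
  proof (rule SLLN_one[OF mu1, where C="max 2 (2 / (1 - mu)) / \<bar>2*p2-1\<bar>"])
    show "integrable M (\<lambda>\<omega>. (S1 n \<omega> / real n)\<^sup>2)" for n using int_Ssq(1)[of n] by (simp add: power_divide)
    show "1 \<le> n \<Longrightarrow> (\<integral>\<omega>. (S1 n \<omega> / real n)\<^sup>2 \<partial>M) \<le> max 2 (2 / (1 - mu)) / \<bar>2*p2-1\<bar> * real n powr (mu - 1)" for n
      by (rule Y_bound[OF mu1 a2])
    show "AE \<omega> in M. \<forall>n. \<bar>S1 (Suc n) \<omega> - S1 n \<omega>\<bar> \<le> 1"
      using AE_good by eventually_elim (simp add: S_Suc good_Xabs)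
  qed auto
  have B: "AE \<omega> in M. (\<lambda>n. S2 n \<omega> / real n) \<longlonglongrightarrow> 0"
  proof (rule SLLN_one[OF mu1, where C="max 2 (2 / (1 - mu)) / \<bar>2*p1-1\<bar>"])
    show "integrable M (\<lambda>\<omega>. (S2 n \<omega> / real n)\<^sup>2)" for n using int_Ssq(2)[of n] by (simp add: power_divide)
    show "1 \<le> n \<Longrightarrow> (\<integral>\<omega>. (S2 n \<omega> / real n)\<^sup>2 \<partial>M) \<le> max 2 (2 / (1 - mu)) / \<bar>2*p1-1\<bar> * real n powr (mu - 1)" for n
      by (rule Y_bound2[OF mu1 a1])
    show "AE \<omega> in M. \<forall>n. \<bar>S2 (Suc n) \<omega> - S2 n \<omega>\<bar> \<le> 1"
      using AE_good by eventually_elim (simp add: S_Suc good_Xabs)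
  qed auto
  from A B show ?thesis by eventually_elim auto
qed

end

lemma cont_bounded_sq:
  fixes C :: "real \<times> real \<Rightarrow> complex"
  assumes "continuous_on UNIV C"
  shows "\<exists>B. \<forall>s t. \<bar>s\<bar> \<le> 1 \<longrightarrow> \<bar>t\<bar> \<le> 1 \<longrightarrow> norm (C (s, t)) \<le> B"
proof -
  have K: "compact ({-1..1} \<times> {-1..1} :: (real \<times> real) set)" by (intro compact_Times compact_Icc)
  have "compact (C ` ({-1..1} \<times> {-1..1}))"
    by (rule compact_continuous_image[OF continuous_on_subset[OF assms] K]) simp
  then have "bounded (C ` ({-1..1} \<times> {-1..1}))" by (rule compact_imp_bounded)
  then obtain B where "\<forall>z \<in> C ` ({-1..1} \<times> {-1..1}). norm z \<le> B" unfolding bounded_iff by blast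
  then show ?thesis by (intro exI[of _ B]) (auto simp: abs_le_iff)
qed

context ew begin

definition "sv j \<omega> = (S1 j \<omega> / real j, S2 j \<omega> / real j)"

lemma sv_meas: "sv j \<in> borel_measurable (FF j)"
  unfolding sv_def using S_meas_FF[of j] by measurable

lemma good_sv: "good \<omega> \<Longrightarrow> 1 \<le> j \<Longrightarrow> \<bar>fst (sv j \<omega>)\<bar> \<le> 1 \<and> \<bar>snd (sv j \<omega>)\<bar> \<le> 1"
  unfolding sv_def using good_Sdiv by auto

lemma coef_props:
  fixes C :: "real \<times> real \<Rightarrow> complex"
  assumes "continuous_on UNIV C" "1 \<le> j"
  shows "(\<lambda>\<omega>. Re (C (sv j \<omega>))) \<in> borel_measurable (FF j)"
    "(\<lambda>\<omega>. Im (C (sv j \<omega>))) \<in> borel_measurable (FF j)"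
    "\<exists>B. AE \<omega> in M. \<bar>Re (C (sv j \<omega>))\<bar> \<le> B \<and> \<bar>Im (C (sv j \<omega>))\<bar> \<le> B"
proof -
  have cRe: "continuous_on UNIV (\<lambda>p. Re (C p))" by (intro continuous_on_Re assms(1))
  have cIm: "continuous_on UNIV (\<lambda>p. Im (C p))" by (intro continuous_on_Im assms(1))
  show "(\<lambda>\<omega>. Re (C (sv j \<omega>))) \<in> borel_measurable (FF j)"
    by (rule measurable_compose[OF sv_meas borel_measurable_continuous_onI[OF cRe]])
  show "(\<lambda>\<omega>. Im (C (sv j \<omega>))) \<in> borel_measurable (FF j)"
    by (rule measurable_compose[OF sv_meas borel_measurable_continuous_onI[OF cIm]])
  obtain B where B: "\<And>s t. \<bar>s\<bar> \<le> 1 \<Longrightarrow> \<bar>t\<bar> \<le> 1 \<Longrightarrow> norm (C (s, t)) \<le> B"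
    using cont_bounded_sq[OF assms(1)] by blast
  have "AE \<omega> in M. \<bar>Re (C (sv j \<omega>))\<bar> \<le> B \<and> \<bar>Im (C (sv j \<omega>))\<bar> \<le> B"
    using AE_good
  proof eventually_elim
    case (elim \<omega>)
    have "norm (C (sv j \<omega>)) \<le> B" using B[of "fst (sv j \<omega>)" "snd (sv j \<omega>)"] good_sv[OF elim assms(2)] by simp
    then show ?case using abs_Re_le_cmod abs_Im_le_cmod order_trans by metis
  qed
  then show "\<exists>B. AE \<omega> in M. \<bar>Re (C (sv j \<omega>))\<bar> \<le> B \<and> \<bar>Im (C (sv j \<omega>))\<bar> \<le> B" by blast
qed

lemma GENC:
  fixes f :: "'a \<Rightarrow> complex" and C0 C1 C2 C3 :: "real \<times> real \<Rightarrow> complex"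
  assumes j: "1 \<le> j" and f: "f \<in> borel_measurable M"
    and c: "continuous_on UNIV C0" "continuous_on UNIV C1" "continuous_on UNIV C2" "continuous_on UNIV C3"
    and ae: "AE \<omega> in M. f \<omega> = C0 (sv j \<omega>) + C1 (sv j \<omega>) * of_real (X1 (Suc j) \<omega>) + C2 (sv j \<omega>) * of_real (X2 (Suc j) \<omega>)
                               + C3 (sv j \<omega>) * of_real (X1 (Suc j) \<omega>) * of_real (X2 (Suc j) \<omega>)"
  shows "AE \<omega> in M. cplx_cond_exp M (FF j) f \<omega> =
            C0 (sv j \<omega>) + C1 (sv j \<omega>) * of_real ((2*p1-1) * S2 j \<omega> / real j) + C2 (sv j \<omega>) * of_real ((2*p2-1) * S1 j \<omega> / real j)
            + C3 (sv j \<omega>) * of_real ((2*p1-1) * (2*p2-1) * S1 j \<omega> * S2 j \<omega> / (real j)\<^sup>2)"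
proof -
  obtain B0 where B0: "AE \<omega> in M. \<bar>Re (C0 (sv j \<omega>))\<bar> \<le> B0 \<and> \<bar>Im (C0 (sv j \<omega>))\<bar> \<le> B0" using coef_props(3)[OF c(1) j] by blast
  obtain B1 where B1: "AE \<omega> in M. \<bar>Re (C1 (sv j \<omega>))\<bar> \<le> B1 \<and> \<bar>Im (C1 (sv j \<omega>))\<bar> \<le> B1" using coef_props(3)[OF c(2) j] by blast
  obtain B2 where B2: "AE \<omega> in M. \<bar>Re (C2 (sv j \<omega>))\<bar> \<le> B2 \<and> \<bar>Im (C2 (sv j \<omega>))\<bar> \<le> B2" using coef_props(3)[OF c(3) j] by blast
  obtain B3 where B3: "AE \<omega> in M. \<bar>Re (C3 (sv j \<omega>))\<bar> \<le> B3 \<and> \<bar>Im (C3 (sv j \<omega>))\<bar> \<le> B3" using coef_props(3)[OF c(4) j] by blast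
  let ?B = "max (max B0 B1) (max B2 B3)"
  have BB: "AE \<omega> in M. (\<bar>Re (C0 (sv j \<omega>))\<bar> \<le> ?B \<and> \<bar>Re (C1 (sv j \<omega>))\<bar> \<le> ?B \<and> \<bar>Re (C2 (sv j \<omega>))\<bar> \<le> ?B \<and> \<bar>Re (C3 (sv j \<omega>))\<bar> \<le> ?B)
     \<and> (\<bar>Im (C0 (sv j \<omega>))\<bar> \<le> ?B \<and> \<bar>Im (C1 (sv j \<omega>))\<bar> \<le> ?B \<and> \<bar>Im (C2 (sv j \<omega>))\<bar> \<le> ?B \<and> \<bar>Im (C3 (sv j \<omega>))\<bar> \<le> ?B)"
    using B0 B1 B2 B3 by eventually_elim (simp add: le_max_iff_disj)
  have fRe: "(\<lambda>\<omega>. Re (f \<omega>)) \<in> borel_measurable M" using f by measurable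
  have fIm: "(\<lambda>\<omega>. Im (f \<omega>)) \<in> borel_measurable M" using f by measurable
  have R: "AE \<omega> in M. real_cond_exp M (FF j) (\<lambda>\<omega>. Re (f \<omega>)) \<omega> =
       Re (C0 (sv j \<omega>)) + Re (C1 (sv j \<omega>)) * ((2*p1-1) * S2 j \<omega> / real j) + Re (C2 (sv j \<omega>)) * ((2*p2-1) * S1 j \<omega> / real j)
       + Re (C3 (sv j \<omega>)) * ((2*p1-1) * (2*p2-1) * S1 j \<omega> * S2 j \<omega> / (real j)\<^sup>2)"
  proof (rule GENR[OF j fRe coef_props(1)[OF c(1) j] coef_props(1)[OF c(2) j] coef_props(1)[OF c(3) j] coef_props(1)[OF c(4) j]])
    show "AE \<omega> in M. \<bar>Re (C0 (sv j \<omega>))\<bar> \<le> ?B \<and> \<bar>Re (C1 (sv j \<omega>))\<bar> \<le> ?B \<and> \<bar>Re (C2 (sv j \<omega>))\<bar> \<le> ?B \<and> \<bar>Re (C3 (sv j \<omega>))\<bar> \<le> ?B"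
      using BB by eventually_elim auto
    show "AE \<omega> in M. Re (f \<omega>) = Re (C0 (sv j \<omega>)) + Re (C1 (sv j \<omega>)) * X1 (Suc j) \<omega> + Re (C2 (sv j \<omega>)) * X2 (Suc j) \<omega>
                               + Re (C3 (sv j \<omega>)) * X1 (Suc j) \<omega> * X2 (Suc j) \<omega>"
      using ae by eventually_elim simp
  qed
  have I: "AE \<omega> in M. real_cond_exp M (FF j) (\<lambda>\<omega>. Im (f \<omega>)) \<omega> =
       Im (C0 (sv j \<omega>)) + Im (C1 (sv j \<omega>)) * ((2*p1-1) * S2 j \<omega> / real j) + Im (C2 (sv j \<omega>)) * ((2*p2-1) * S1 j \<omega> / real j)
       + Im (C3 (sv j \<omega>)) * ((2*p1-1) * (2*p2-1) * S1 j \<omega> * S2 j \<omega> / (real j)\<^sup>2)"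
  proof (rule GENR[OF j fIm coef_props(2)[OF c(1) j] coef_props(2)[OF c(2) j] coef_props(2)[OF c(3) j] coef_props(2)[OF c(4) j]])
    show "AE \<omega> in M. \<bar>Im (C0 (sv j \<omega>))\<bar> \<le> ?B \<and> \<bar>Im (C1 (sv j \<omega>))\<bar> \<le> ?B \<and> \<bar>Im (C2 (sv j \<omega>))\<bar> \<le> ?B \<and> \<bar>Im (C3 (sv j \<omega>))\<bar> \<le> ?B"
      using BB by eventually_elim auto
    show "AE \<omega> in M. Im (f \<omega>) = Im (C0 (sv j \<omega>)) + Im (C1 (sv j \<omega>)) * X1 (Suc j) \<omega> + Im (C2 (sv j \<omega>)) * X2 (Suc j) \<omega>
                               + Im (C3 (sv j \<omega>)) * X1 (Suc j) \<omega> * X2 (Suc j) \<omega>"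
      using ae by eventually_elim simp
  qed
  from R I show ?thesis
    by eventually_elim (simp add: cplx_cond_exp_def complex_eq_iff)
qed

end

lemma r_sq: "a1 * a2 \<noteq> 0 \<Longrightarrow> (r_alpha a1 a2)\<^sup>2 = complex_of_real (a1 / a2)"
proof -
  assume h: "a1 * a2 \<noteq> 0"
  show ?thesis
  proof (cases "a1 * a2 > 0")
    case True
    then have pos: "a1 / a2 > 0" by (metis zero_less_divide_iff zero_less_mult_iff)
    have e1: "(sqrt (a1 / a2))\<^sup>2 = a1 / a2" using pos by simp
    have "(r_alpha a1 a2)\<^sup>2 = (complex_of_real (sqrt (a1 / a2)))\<^sup>2" unfolding r_alpha_def using True by simp
    also have "\<dots> = complex_of_real ((sqrt (a1 / a2))\<^sup>2)" by (simp only: of_real_power)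
    finally show ?thesis unfolding e1 .
  next
    case False
    then have "a1 * a2 < 0" using h by linarith
    then have neg: "a1 / a2 < 0" by (simp add: mult_less_0_iff divide_less_0_iff)
    have e1: "(sqrt (- (a1 / a2)))\<^sup>2 = - (a1 / a2)" using neg by simp
    have "(r_alpha a1 a2)\<^sup>2 = (\<i> * complex_of_real (sqrt (- (a1 / a2))))\<^sup>2" unfolding r_alpha_def using False by simp
    also have "\<dots> = \<i>\<^sup>2 * complex_of_real ((sqrt (- (a1 / a2)))\<^sup>2)" by (simp only: power_mult_distrib of_real_power[symmetric])
    also have "\<dots> = complex_of_real (a1 / a2)" unfolding e1 by simp
    finally show ?thesis .
  qed
qed

lemma lam_sq: "a1 * a2 \<noteq> 0 \<Longrightarrow> (lam_alpha a1 a2)\<^sup>2 = complex_of_real (a1 * a2)"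
proof -
  assume h: "a1 * a2 \<noteq> 0"
  then have a2: "a2 \<noteq> 0" by auto
  have sg: "(sgn a2)\<^sup>2 = 1" using a2 by (cases "a2 > 0") auto
  show ?thesis
  proof (cases "a1 * a2 > 0")
    case True
    have e1: "(sqrt (a1 * a2))\<^sup>2 = a1 * a2" using True by simp
    have "(lam_alpha a1 a2)\<^sup>2 = (complex_of_real (sgn a2 * sqrt (a1 * a2)))\<^sup>2" unfolding lam_alpha_def using True by simp
    also have "\<dots> = complex_of_real ((sgn a2)\<^sup>2 * (sqrt (a1 * a2))\<^sup>2)" by (simp only: power_mult_distrib of_real_power[symmetric])
    also have "\<dots> = complex_of_real (a1 * a2)" unfolding sg e1 by simp
    finally show ?thesis .
  next
    case False
    then have neg: "a1 * a2 < 0" using h by linarith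
    have e1: "(sqrt (- (a1 * a2)))\<^sup>2 = - (a1 * a2)" using neg by simp
    have "(lam_alpha a1 a2)\<^sup>2 = (\<i> * complex_of_real (sgn a2 * sqrt (- (a1 * a2))))\<^sup>2" unfolding lam_alpha_def using False by simp
    also have "\<dots> = \<i>\<^sup>2 * complex_of_real ((sgn a2)\<^sup>2 * (sqrt (- (a1 * a2)))\<^sup>2)" by (simp only: power_mult_distrib of_real_power[symmetric])
    also have "\<dots> = complex_of_real (a1 * a2)" unfolding sg e1 by simp
    finally show ?thesis .
  qed
qed

lemma mu_lt1:
  assumes "\<bar>a1\<bar> \<le> 1" "\<bar>a2\<bar> \<le> 1" "a2 \<noteq> 0" "lam_alpha a1 a2 \<noteq> 1" "lam_alpha a1 a2 \<noteq> -1"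
  shows "(if a1 * a2 > 0 then sqrt (a1 * a2) else 0) < 1"
proof (cases "a1 * a2 > 0")
  case True
  have "\<bar>a1 * a2\<bar> \<le> 1" unfolding abs_mult using assms(1,2) by (intro mult_le_one) auto
  then have "a1 * a2 \<le> 1" by simp
  then have le: "sqrt (a1 * a2) \<le> 1" by simp
  have "sqrt (a1 * a2) \<noteq> 1"
  proof
    assume s: "sqrt (a1 * a2) = 1"
    have "lam_alpha a1 a2 = complex_of_real (sgn a2)" unfolding lam_alpha_def using True s by simp
    moreover have "sgn a2 = 1 \<or> sgn a2 = -1" using assms(3) by (cases "a2 > 0") auto
    ultimately show False using assms(4,5) by auto
  qed
  then show ?thesis using le True by simp
qed simp

lemma alg_ex:
  fixes A B r lam x :: complex
  assumes "A * A = 1" "B * B = 1"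
  shows "((A - r*B + lam*x)/(1+lam))\<^sup>2 = (1 + r\<^sup>2 + lam\<^sup>2*x\<^sup>2)/(1+lam)\<^sup>2 + 2*lam*x/(1+lam)\<^sup>2 * A
           + (-2*r*lam*x/(1+lam)\<^sup>2) * B + (-2*r/(1+lam)\<^sup>2) * A * B"
proof -
  have "(A - r*B + lam*x)\<^sup>2 = (1 + r\<^sup>2 + lam\<^sup>2*x\<^sup>2) + 2*lam*x * A + (-2*r*lam*x) * B + (-2*r) * A * B"
    using assms(1,2) by algebra
  then show ?thesis by (simp only: power_divide times_divide_eq_left add_divide_distrib[symmetric])
qed

lemma alg_ey:
  fixes A B r lam y :: complex
  assumes "A * A = 1" "B * B = 1"
  shows "((A + r*B - lam*y)/(1-lam))\<^sup>2 = (1 + r\<^sup>2 + lam\<^sup>2*y\<^sup>2)/(1-lam)\<^sup>2 + (-2*lam*y/(1-lam)\<^sup>2) * A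
           + (-2*r*lam*y/(1-lam)\<^sup>2) * B + (2*r/(1-lam)\<^sup>2) * A * B"
proof -
  have "(A + r*B - lam*y)\<^sup>2 = (1 + r\<^sup>2 + lam\<^sup>2*y\<^sup>2) + (-2*lam*y) * A + (-2*r*lam*y) * B + (2*r) * A * B"
    using assms(1,2) by algebra
  then show ?thesis by (simp only: power_divide times_divide_eq_left add_divide_distrib[symmetric])
qed

lemma alg_exy:
  fixes A B r lam x y :: complex
  assumes "A * A = 1" "B * B = 1"
  shows "((A - r*B + lam*x)/(1+lam)) * ((A + r*B - lam*y)/(1-lam)) =
      (1 - r\<^sup>2 - lam\<^sup>2*x*y)/((1+lam)*(1-lam)) + (lam*(x-y)/((1+lam)*(1-lam))) * A
           + (r*lam*(x+y)/((1+lam)*(1-lam))) * B + (0/((1+lam)*(1-lam))) * A * B"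
proof -
  have "(A - r*B + lam*x) * (A + r*B - lam*y) = (1 - r\<^sup>2 - lam\<^sup>2*x*y) + (lam*(x-y)) * A + (r*lam*(x+y)) * B + 0 * A * B"
    using assms(1,2) by algebra
  moreover have "((A - r*B + lam*x)/(1+lam)) * ((A + r*B - lam*y)/(1-lam)) = ((A - r*B + lam*x) * (A + r*B - lam*y))/((1+lam)*(1-lam))"
    by (rule times_divide_times_eq)
  ultimately show ?thesis by (simp only: times_divide_eq_left add_divide_distrib[symmetric])
qed

context ew begin

lemma cond_lim:
  fixes f :: "nat \<Rightarrow> 'a \<Rightarrow> complex" and C0 C1 C2 C3 :: "real \<times> real \<Rightarrow> complex"
  assumes c: "continuous_on UNIV C0" "continuous_on UNIV C1" "continuous_on UNIV C2" "continuous_on UNIV C3"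
    and fm: "\<And>j. f j \<in> borel_measurable M"
    and ae: "\<And>j. 1 \<le> j \<Longrightarrow> AE \<omega> in M. f j \<omega> = C0 (sv j \<omega>) + C1 (sv j \<omega>) * of_real (X1 (Suc j) \<omega>) + C2 (sv j \<omega>) * of_real (X2 (Suc j) \<omega>)
                               + C3 (sv j \<omega>) * of_real (X1 (Suc j) \<omega>) * of_real (X2 (Suc j) \<omega>)"
    and slln: "AE \<omega> in M. (\<lambda>n. S1 n \<omega> / real n) \<longlonglongrightarrow> 0 \<and> (\<lambda>n. S2 n \<omega> / real n) \<longlonglongrightarrow> 0"
  shows "AE \<omega> in M. (\<lambda>j. cplx_cond_exp M (FF j) (f j) \<omega>) \<longlonglongrightarrow> C0 (0, 0)"
proof -
  define P where "P = (\<lambda>j \<omega>. C0 (sv j \<omega>) + C1 (sv j \<omega>) * of_real ((2*p1-1) * S2 j \<omega> / real j) + C2 (sv j \<omega>) * of_real ((2*p2-1) * S1 j \<omega> / real j)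
            + C3 (sv j \<omega>) * of_real ((2*p1-1) * (2*p2-1) * S1 j \<omega> * S2 j \<omega> / (real j)\<^sup>2))"
  have "AE \<omega> in M. 1 \<le> j \<longrightarrow> cplx_cond_exp M (FF j) (f j) \<omega> = P j \<omega>" for j
  proof (cases "1 \<le> j")
    case True
    from GENC[OF True fm c ae[OF True]] show ?thesis unfolding P_def by eventually_elim simp
  qed simp
  then have AEall: "AE \<omega> in M. \<forall>j. 1 \<le> j \<longrightarrow> cplx_cond_exp M (FF j) (f j) \<omega> = P j \<omega>"
    by (simp add: AE_all_countable)
  from AEall slln show ?thesis
  proof eventually_elim
    case (elim \<omega>)
    have s1: "(\<lambda>j. S1 j \<omega> / real j) \<longlonglongrightarrow> 0" and s2: "(\<lambda>j. S2 j \<omega> / real j) \<longlonglongrightarrow> 0" using elim(2) by auto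
    have sv0: "(\<lambda>j. sv j \<omega>) \<longlonglongrightarrow> (0, 0)" unfolding sv_def by (rule tendsto_Pair[OF s1 s2])
    have Ct: "(\<lambda>j. C (sv j \<omega>)) \<longlonglongrightarrow> C (0, 0)" if "continuous_on UNIV C" for C :: "real \<times> real \<Rightarrow> complex"
      by (rule continuous_on_tendsto_compose[OF that sv0]) auto
    have m1: "(\<lambda>j. complex_of_real ((2*p1-1) * S2 j \<omega> / real j)) \<longlonglongrightarrow> 0"
    proof -
      have "(\<lambda>j. (2*p1-1) * (S2 j \<omega> / real j)) \<longlonglongrightarrow> (2*p1-1) * 0" by (intro tendsto_mult_left s2)
      then have "(\<lambda>j. (2*p1-1) * S2 j \<omega> / real j) \<longlonglongrightarrow> 0" by simp
      from tendsto_of_real[OF this, where 'a=complex] show ?thesis unfolding of_real_0 .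
    qed
    have m2: "(\<lambda>j. complex_of_real ((2*p2-1) * S1 j \<omega> / real j)) \<longlonglongrightarrow> 0"
    proof -
      have "(\<lambda>j. (2*p2-1) * (S1 j \<omega> / real j)) \<longlonglongrightarrow> (2*p2-1) * 0" by (intro tendsto_mult_left s1)
      then have "(\<lambda>j. (2*p2-1) * S1 j \<omega> / real j) \<longlonglongrightarrow> 0" by simp
      from tendsto_of_real[OF this, where 'a=complex] show ?thesis unfolding of_real_0 .
    qed
    have m3: "(\<lambda>j. complex_of_real ((2*p1-1) * (2*p2-1) * S1 j \<omega> * S2 j \<omega> / (real j)\<^sup>2)) \<longlonglongrightarrow> 0"
    proof -
      have "(\<lambda>j. (2*p1-1) * (2*p2-1) * ((S1 j \<omega> / real j) * (S2 j \<omega> / real j))) \<longlonglongrightarrow> (2*p1-1) * (2*p2-1) * (0 * 0)"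
        by (intro tendsto_mult_left tendsto_mult s1 s2)
      then have "(\<lambda>j. (2*p1-1) * (2*p2-1) * S1 j \<omega> * S2 j \<omega> / (real j)\<^sup>2) \<longlonglongrightarrow> 0" by (simp add: power2_eq_square mult.assoc)
      from tendsto_of_real[OF this, where 'a=complex] show ?thesis unfolding of_real_0 .
    qed
    have "(\<lambda>j. P j \<omega>) \<longlonglongrightarrow> C0 (0,0) + C1 (0,0) * 0 + C2 (0,0) * 0 + C3 (0,0) * 0"
      unfolding P_def by (intro tendsto_add tendsto_mult Ct c m1 m2 m3)
    then have "(\<lambda>j. P j \<omega>) \<longlonglongrightarrow> C0 (0,0)" by simp
    moreover have "eventually (\<lambda>j. P j \<omega> = cplx_cond_exp M (FF j) (f j) \<omega>) sequentially"
      using elim(1) unfolding eventually_sequentially by (intro exI[of _ 1]) auto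
    ultimately show ?case by (rule Lim_transform_eventually)
  qed
qed

lemma x_sv: "(complex_of_real (S1 n \<omega>) - r * complex_of_real (S2 n \<omega>)) / of_nat n =
    complex_of_real (fst (sv n \<omega>)) - r * complex_of_real (snd (sv n \<omega>))"
  unfolding sv_def by (simp add: diff_divide_distrib of_real_divide)

lemma y_sv: "(complex_of_real (S1 n \<omega>) + r * complex_of_real (S2 n \<omega>)) / of_nat n =
    complex_of_real (fst (sv n \<omega>)) + r * complex_of_real (snd (sv n \<omega>))"
  unfolding sv_def by (simp add: add_divide_distrib of_real_divide)

lemma good_AA: "good \<omega> \<Longrightarrow> complex_of_real (X1 k \<omega>) * complex_of_real (X1 k \<omega>) = 1"
  "good \<omega> \<Longrightarrow> complex_of_real (X2 k \<omega>) * complex_of_real (X2 k \<omega>) = 1"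
  using good_X[of \<omega> k] by (auto simp flip: of_real_mult)

end

theorem lemma3p2:
  fixes M :: "'a measure"
    and p1 p2 al1 al2 :: real
    and a b :: int
    and xi1 xi2 u1 u2 :: "nat \<Rightarrow> 'a \<Rightarrow> nat"
    and X1 X2 S1 S2 :: "nat \<Rightarrow> 'a \<Rightarrow> real"
    and F :: "nat \<Rightarrow> 'a measure"
    and lam r :: complex
    and x y ex ey :: "nat \<Rightarrow> 'a \<Rightarrow> complex"
  assumes "prob_space M"
    and "p1 \<in> {0..1}" and "p2 \<in> {0..1}"
    and al1_def: "al1 = 2 * p1 - 1" and al2_def: "al2 = 2 * p2 - 1"
    and "a \<in> {-1, 1}" and "b \<in> {-1, 1}"
    and indep: "prob_space.indep_vars M (\<lambda>_. count_space UNIV) (ew_family xi1 xi2 u1 u2) ew_index"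
    and xi1_distr: "\<forall>n\<ge>2. distr M (count_space UNIV) (xi1 n) = measure_pmf (map_pmf of_bool (bernoulli_pmf p1))"
    and xi2_distr: "\<forall>n\<ge>2. distr M (count_space UNIV) (xi2 n) = measure_pmf (map_pmf of_bool (bernoulli_pmf p2))"
    and u1_distr: "\<forall>n\<ge>1. distr M (count_space UNIV) (u1 n) = measure_pmf (pmf_of_set {1..n})"
    and u2_distr: "\<forall>n\<ge>1. distr M (count_space UNIV) (u2 n) = measure_pmf (pmf_of_set {1..n})"
    and X1_def: "X1 = (\<lambda>k \<omega>. real_of_int (fst (ew_step a b (\<lambda>n. xi1 n \<omega>) (\<lambda>n. xi2 n \<omega>) (\<lambda>n. u1 n \<omega>) (\<lambda>n. u2 n \<omega>) k)))"
    and X2_def: "X2 = (\<lambda>k \<omega>. real_of_int (snd (ew_step a b (\<lambda>n. xi1 n \<omega>) (\<lambda>n. xi2 n \<omega>) (\<lambda>n. u1 n \<omega>) (\<lambda>n. u2 n \<omega>) k)))"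
    and S1_def: "S1 = (\<lambda>n \<omega>. \<Sum>k\<in>{1..n}. X1 k \<omega>)"
    and S2_def: "S2 = (\<lambda>n \<omega>. \<Sum>k\<in>{1..n}. X2 k \<omega>)"
    and F_def: "F = (\<lambda>n. sigma (space M)
                 ({X1 k -` A \<inter> space M | k A. k \<in> {1..n} \<and> A \<in> sets borel} \<union>
                  {X2 k -` A \<inter> space M | k A. k \<in> {1..n} \<and> A \<in> sets borel}))"
    and lam_def: "lam = lam_alpha al1 al2"
    and r_def: "r = r_alpha al1 al2"
    and x_def: "x = (\<lambda>n \<omega>. (complex_of_real (S1 n \<omega>) - r * complex_of_real (S2 n \<omega>)) / of_nat n)"
    and y_def: "y = (\<lambda>n \<omega>. (complex_of_real (S1 n \<omega>) + r * complex_of_real (S2 n \<omega>)) / of_nat n)"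
    and ex_def: "ex = (\<lambda>j \<omega>. (complex_of_real (X1 (j + 1) \<omega>) - r * complex_of_real (X2 (j + 1) \<omega>)
                                 + lam * x j \<omega>) / (1 + lam))"
    and ey_def: "ey = (\<lambda>j \<omega>. (complex_of_real (X1 (j + 1) \<omega>) + r * complex_of_real (X2 (j + 1) \<omega>)
                                 - lam * y j \<omega>) / (1 - lam))"
    and "al1 * al2 \<noteq> 0"
    and "lam \<noteq> 1" and "lam \<noteq> -1"
  shows "(AE \<omega> in M. (\<lambda>n. x n \<omega>) \<longlonglongrightarrow> 0 \<and> (\<lambda>n. y n \<omega>) \<longlonglongrightarrow> 0)
       \<and> (AE \<omega> in M. (\<lambda>n. S1 n \<omega> / real n) \<longlonglongrightarrow> 0 \<and> (\<lambda>n. S2 n \<omega> / real n) \<longlonglongrightarrow> 0)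
       \<and> (AE \<omega> in M.
            (\<lambda>j. (1 + lam)\<^sup>2 * cplx_cond_exp M (F j) (\<lambda>\<omega>. (ex j \<omega>)\<^sup>2) \<omega>)
               \<longlonglongrightarrow> 1 + complex_of_real (al1 / al2)
          \<and> (\<lambda>j. (1 - lam)\<^sup>2 * cplx_cond_exp M (F j) (\<lambda>\<omega>. (ey j \<omega>)\<^sup>2) \<omega>)
               \<longlonglongrightarrow> 1 + complex_of_real (al1 / al2))
       \<and> (AE \<omega> in M.
            (\<lambda>j. complex_of_real (1 - al1 * al2) * cplx_cond_exp M (F j) (\<lambda>\<omega>. ex j \<omega> * ey j \<omega>) \<omega>)
               \<longlonglongrightarrow> 1 - complex_of_real (al1 / al2))"
proof -
  have ewI: "ew M p1 p2 a b xi1 xi2 u1 u2"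
    unfolding ew_def ew_axioms_def using assms(1,2,3,6,7) indep xi1_distr xi2_distr u1_distr u2_distr by blast
  interpret E: ew M p1 p2 a b xi1 xi2 u1 u2 by (rule ewI)
  have hX1: "X1 = E.X1" unfolding X1_def E.X1_def ..
  have hX2: "X2 = E.X2" unfolding X2_def E.X2_def ..
  have hS1: "S1 = E.S1" unfolding S1_def E.S1_def hX1 ..
  have hS2: "S2 = E.S2" unfolding S2_def E.S2_def hX2 ..
  have hF: "F = E.FF" unfolding F_def E.FF_def hX1 hX2 ..
  have a0: "al1 * al2 \<noteq> 0" by fact
  then have a1: "al1 \<noteq> 0" "al2 \<noteq> 0" by auto
  have lam1: "lam \<noteq> 1" "lam \<noteq> -1" by fact+
  have pp: "p1 \<in> {0..1}" "p2 \<in> {0..1}" by fact+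
  have mu1: "E.mu < 1"
  proof -
    have "(if al1 * al2 > 0 then sqrt (al1 * al2) else 0) < 1"
      by (rule mu_lt1) (use pp al1_def al2_def a1 lam1 lam_def in auto)
    then show ?thesis unfolding E.mu_def al1_def al2_def .
  qed
  have slln0: "AE \<omega> in M. (\<lambda>n. E.S1 n \<omega> / real n) \<longlonglongrightarrow> 0 \<and> (\<lambda>n. E.S2 n \<omega> / real n) \<longlonglongrightarrow> 0"
    by (rule E.SLLN[OF mu1]) (use a1 al1_def al2_def in auto)
  define xf where "xf = (\<lambda>p::real\<times>real. complex_of_real (fst p) - r * complex_of_real (snd p))"
  define yf where "yf = (\<lambda>p::real\<times>real. complex_of_real (fst p) + r * complex_of_real (snd p))"
  have xj: "x j \<omega> = xf (E.sv j \<omega>)" for j \<omega> unfolding x_def xf_def hS1 hS2 by (rule E.x_sv)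
  have yj: "y j \<omega> = yf (E.sv j \<omega>)" for j \<omega> unfolding y_def yf_def hS1 hS2 by (rule E.y_sv)
  have cx: "continuous_on UNIV xf" unfolding xf_def by (intro continuous_intros)
  have cy: "continuous_on UNIV yf" unfolding yf_def by (intro continuous_intros)
  have xf0: "xf (0, 0) = 0" "yf (0, 0) = 0" unfolding xf_def yf_def by simp_all
  have d1: "1 + lam \<noteq> 0"
  proof
    assume "1 + lam = 0"
    then have "lam = -1" by (simp add: add_eq_0_iff)
    with lam1 show False by simp
  qed
  have d2: "1 - lam \<noteq> 0" using lam1 by simp
  have rsq: "r\<^sup>2 = complex_of_real (al1 / al2)" unfolding r_def by (rule r_sq[OF a0])
  have lsq: "lam\<^sup>2 = complex_of_real (al1 * al2)" unfolding lam_def by (rule lam_sq[OF a0])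
  have svlim: "AE \<omega> in M. (\<lambda>j. E.sv j \<omega>) \<longlonglongrightarrow> (0, 0)"
    using slln0 by eventually_elim (unfold E.sv_def, rule tendsto_Pair, auto)
  have part1: "AE \<omega> in M. (\<lambda>n. x n \<omega>) \<longlonglongrightarrow> 0 \<and> (\<lambda>n. y n \<omega>) \<longlonglongrightarrow> 0"
    using svlim
  proof eventually_elim
    case (elim \<omega>)
    have A: "(\<lambda>n. xf (E.sv n \<omega>)) \<longlonglongrightarrow> xf (0, 0)"
      by (rule continuous_on_tendsto_compose[OF cx elim]) simp_all
    have B: "(\<lambda>n. yf (E.sv n \<omega>)) \<longlonglongrightarrow> yf (0, 0)"
      by (rule continuous_on_tendsto_compose[OF cy elim]) simp_all
    have A': "(\<lambda>n. x n \<omega>) \<longlonglongrightarrow> 0" using A unfolding xf0 xj[symmetric] .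
    have B': "(\<lambda>n. y n \<omega>) \<longlonglongrightarrow> 0" using B unfolding xf0 yj[symmetric] .
    show ?case using A' B' by (rule conjI)
  qed
  have part2: "AE \<omega> in M. (\<lambda>n. S1 n \<omega> / real n) \<longlonglongrightarrow> 0 \<and> (\<lambda>n. S2 n \<omega> / real n) \<longlonglongrightarrow> 0"
    using slln0 unfolding hS1 hS2 .
  have ofX: "(\<lambda>\<omega>. complex_of_real (f \<omega>)) \<in> borel_measurable M" if "f \<in> borel_measurable M" for f :: "'a \<Rightarrow> real"
    using measurable_compose[OF that borel_measurable_of_real] by simp
  have mx: "(\<lambda>\<omega>. x j \<omega>) \<in> borel_measurable M" "(\<lambda>\<omega>. y j \<omega>) \<in> borel_measurable M" for j
    unfolding x_def y_def hS1 hS2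
    by (rule borel_measurable_divide, rule borel_measurable_diff borel_measurable_add, rule ofX[OF E.S_meas_M(1)],
        rule borel_measurable_times, rule borel_measurable_const, rule ofX[OF E.S_meas_M(2)], rule borel_measurable_const)+
  have mex: "(\<lambda>\<omega>. ex j \<omega>) \<in> borel_measurable M" for j
    unfolding ex_def hX1 hX2
    by (rule borel_measurable_divide, rule borel_measurable_add, rule borel_measurable_diff, rule ofX[OF E.X_meas_M(1)],
        rule borel_measurable_times, rule borel_measurable_const, rule ofX[OF E.X_meas_M(2)],
        rule borel_measurable_times, rule borel_measurable_const, rule mx(1), rule borel_measurable_const)
  have mey: "(\<lambda>\<omega>. ey j \<omega>) \<in> borel_measurable M" for j
    unfolding ey_def hX1 hX2
    by (rule borel_measurable_divide, rule borel_measurable_diff, rule borel_measurable_add, rule ofX[OF E.X_meas_M(1)],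
        rule borel_measurable_times, rule borel_measurable_const, rule ofX[OF E.X_meas_M(2)],
        rule borel_measurable_times, rule borel_measurable_const, rule mx(2), rule borel_measurable_const)
  have ex_meas: "(\<lambda>\<omega>. (ex j \<omega>)\<^sup>2) \<in> borel_measurable M" "(\<lambda>\<omega>. (ey j \<omega>)\<^sup>2) \<in> borel_measurable M"
    "(\<lambda>\<omega>. ex j \<omega> * ey j \<omega>) \<in> borel_measurable M" for j
    by (rule borel_measurable_power[OF mex], rule borel_measurable_power[OF mey], rule borel_measurable_times[OF mex mey])
  have exj: "ex j \<omega> = (complex_of_real (E.X1 (Suc j) \<omega>) - r * complex_of_real (E.X2 (Suc j) \<omega>) + lam * xf (E.sv j \<omega>)) / (1 + lam)" for j \<omega>
    unfolding ex_def xj hX1 hX2 by simp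
  have eyj: "ey j \<omega> = (complex_of_real (E.X1 (Suc j) \<omega>) + r * complex_of_real (E.X2 (Suc j) \<omega>) - lam * yf (E.sv j \<omega>)) / (1 - lam)" for j \<omega>
    unfolding ey_def yj hX1 hX2 by simp
  have L1: "AE \<omega> in M. (\<lambda>j. cplx_cond_exp M (E.FF j) (\<lambda>\<omega>. (ex j \<omega>)\<^sup>2) \<omega>) \<longlonglongrightarrow>
      (\<lambda>p. (1 + r\<^sup>2 + lam\<^sup>2 * (xf p)\<^sup>2) / (1 + lam)\<^sup>2) (0, 0)"
  proof (rule E.cond_lim[of "\<lambda>p. (1 + r\<^sup>2 + lam\<^sup>2 * (xf p)\<^sup>2) / (1 + lam)\<^sup>2" "\<lambda>p. 2*lam*xf p/(1+lam)\<^sup>2"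
        "\<lambda>p. -2*r*lam*xf p/(1+lam)\<^sup>2" "\<lambda>p. -2*r/(1+lam)\<^sup>2" "\<lambda>j \<omega>. (ex j \<omega>)\<^sup>2", OF _ _ _ _ ex_meas(1) _ slln0])
    show "continuous_on UNIV (\<lambda>p. (1 + r\<^sup>2 + lam\<^sup>2 * (xf p)\<^sup>2) / (1 + lam)\<^sup>2)"
      using d1 by (intro continuous_intros cx) auto
    show "continuous_on UNIV (\<lambda>p. 2*lam*xf p/(1+lam)\<^sup>2)"
      using d1 by (intro continuous_intros cx) auto
    show "continuous_on UNIV (\<lambda>p. -2*r*lam*xf p/(1+lam)\<^sup>2)"
      using d1 by (intro continuous_intros cx) auto
    show "continuous_on UNIV (\<lambda>p::real\<times>real. -2*r/(1+lam)\<^sup>2)"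
      by (intro continuous_intros)
    fix j :: nat assume "1 \<le> j"
    show "AE \<omega> in M. (ex j \<omega>)\<^sup>2 = (1 + r\<^sup>2 + lam\<^sup>2 * (xf (E.sv j \<omega>))\<^sup>2) / (1 + lam)\<^sup>2
       + 2*lam*xf (E.sv j \<omega>)/(1+lam)\<^sup>2 * complex_of_real (E.X1 (Suc j) \<omega>)
       + -2*r*lam*xf (E.sv j \<omega>)/(1+lam)\<^sup>2 * complex_of_real (E.X2 (Suc j) \<omega>)
       + -2*r/(1+lam)\<^sup>2 * complex_of_real (E.X1 (Suc j) \<omega>) * complex_of_real (E.X2 (Suc j) \<omega>)"
      using E.AE_good
    proof eventually_elim
      case (elim \<omega>)
      show ?case unfolding exj by (rule alg_ex[OF E.good_AA(1)[OF elim] E.good_AA(2)[OF elim]])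
    qed
  qed
  have L2: "AE \<omega> in M. (\<lambda>j. cplx_cond_exp M (E.FF j) (\<lambda>\<omega>. (ey j \<omega>)\<^sup>2) \<omega>) \<longlonglongrightarrow>
      (\<lambda>p. (1 + r\<^sup>2 + lam\<^sup>2 * (yf p)\<^sup>2) / (1 - lam)\<^sup>2) (0, 0)"
  proof (rule E.cond_lim[of "\<lambda>p. (1 + r\<^sup>2 + lam\<^sup>2 * (yf p)\<^sup>2) / (1 - lam)\<^sup>2" "\<lambda>p. -2*lam*yf p/(1-lam)\<^sup>2"
        "\<lambda>p. -2*r*lam*yf p/(1-lam)\<^sup>2" "\<lambda>p. 2*r/(1-lam)\<^sup>2" "\<lambda>j \<omega>. (ey j \<omega>)\<^sup>2", OF _ _ _ _ ex_meas(2) _ slln0])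
    show "continuous_on UNIV (\<lambda>p. (1 + r\<^sup>2 + lam\<^sup>2 * (yf p)\<^sup>2) / (1 - lam)\<^sup>2)"
      using d2 by (intro continuous_intros cy) auto
    show "continuous_on UNIV (\<lambda>p. -2*lam*yf p/(1-lam)\<^sup>2)"
      using d2 by (intro continuous_intros cy) auto
    show "continuous_on UNIV (\<lambda>p. -2*r*lam*yf p/(1-lam)\<^sup>2)"
      using d2 by (intro continuous_intros cy) auto
    show "continuous_on UNIV (\<lambda>p::real\<times>real. 2*r/(1-lam)\<^sup>2)"
      by (intro continuous_intros)
    fix j :: nat assume "1 \<le> j"
    show "AE \<omega> in M. (ey j \<omega>)\<^sup>2 = (1 + r\<^sup>2 + lam\<^sup>2 * (yf (E.sv j \<omega>))\<^sup>2) / (1 - lam)\<^sup>2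
       + -2*lam*yf (E.sv j \<omega>)/(1-lam)\<^sup>2 * complex_of_real (E.X1 (Suc j) \<omega>)
       + -2*r*lam*yf (E.sv j \<omega>)/(1-lam)\<^sup>2 * complex_of_real (E.X2 (Suc j) \<omega>)
       + 2*r/(1-lam)\<^sup>2 * complex_of_real (E.X1 (Suc j) \<omega>) * complex_of_real (E.X2 (Suc j) \<omega>)"
      using E.AE_good
    proof eventually_elim
      case (elim \<omega>)
      show ?case unfolding eyj by (rule alg_ey[OF E.good_AA(1)[OF elim] E.good_AA(2)[OF elim]])
    qed
  qed
  have L3: "AE \<omega> in M. (\<lambda>j. cplx_cond_exp M (E.FF j) (\<lambda>\<omega>. ex j \<omega> * ey j \<omega>) \<omega>) \<longlonglongrightarrow>
      (\<lambda>p. (1 - r\<^sup>2 - lam\<^sup>2 * xf p * yf p) / ((1 + lam) * (1 - lam))) (0, 0)"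
  proof (rule E.cond_lim[of "\<lambda>p. (1 - r\<^sup>2 - lam\<^sup>2 * xf p * yf p) / ((1 + lam) * (1 - lam))" "\<lambda>p. lam*(xf p - yf p)/((1+lam)*(1-lam))"
        "\<lambda>p. r*lam*(xf p + yf p)/((1+lam)*(1-lam))" "\<lambda>p. 0/((1+lam)*(1-lam))" "\<lambda>j \<omega>. ex j \<omega> * ey j \<omega>", OF _ _ _ _ ex_meas(3) _ slln0])
    show "continuous_on UNIV (\<lambda>p. (1 - r\<^sup>2 - lam\<^sup>2 * xf p * yf p) / ((1 + lam) * (1 - lam)))"
      using d1 d2 by (intro continuous_intros cx cy) auto
    show "continuous_on UNIV (\<lambda>p. lam*(xf p - yf p)/((1+lam)*(1-lam)))"
      using d1 d2 by (intro continuous_intros cx cy) auto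
    show "continuous_on UNIV (\<lambda>p. r*lam*(xf p + yf p)/((1+lam)*(1-lam)))"
      using d1 d2 by (intro continuous_intros cx cy) auto
    show "continuous_on UNIV (\<lambda>p::real\<times>real. 0/((1+lam)*(1-lam)))"
      by (intro continuous_intros)
    fix j :: nat assume "1 \<le> j"
    show "AE \<omega> in M. ex j \<omega> * ey j \<omega> = (1 - r\<^sup>2 - lam\<^sup>2 * xf (E.sv j \<omega>) * yf (E.sv j \<omega>)) / ((1 + lam) * (1 - lam))
       + lam*(xf (E.sv j \<omega>) - yf (E.sv j \<omega>))/((1+lam)*(1-lam)) * complex_of_real (E.X1 (Suc j) \<omega>)
       + r*lam*(xf (E.sv j \<omega>) + yf (E.sv j \<omega>))/((1+lam)*(1-lam)) * complex_of_real (E.X2 (Suc j) \<omega>)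
       + 0/((1+lam)*(1-lam)) * complex_of_real (E.X1 (Suc j) \<omega>) * complex_of_real (E.X2 (Suc j) \<omega>)"
      using E.AE_good
    proof eventually_elim
      case (elim \<omega>)
      show ?case unfolding exj eyj by (rule alg_exy[OF E.good_AA(1)[OF elim] E.good_AA(2)[OF elim]])
    qed
  qed
  have part3: "AE \<omega> in M.
            (\<lambda>j. (1 + lam)\<^sup>2 * cplx_cond_exp M (F j) (\<lambda>\<omega>. (ex j \<omega>)\<^sup>2) \<omega>)
               \<longlonglongrightarrow> 1 + complex_of_real (al1 / al2)
          \<and> (\<lambda>j. (1 - lam)\<^sup>2 * cplx_cond_exp M (F j) (\<lambda>\<omega>. (ey j \<omega>)\<^sup>2) \<omega>)
               \<longlonglongrightarrow> 1 + complex_of_real (al1 / al2)"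
    using L1 L2
  proof eventually_elim
    case (elim \<omega>)
    have e1: "(1 + lam)\<^sup>2 * ((\<lambda>p. (1 + r\<^sup>2 + lam\<^sup>2 * (xf p)\<^sup>2) / (1 + lam)\<^sup>2) (0, 0)) = 1 + complex_of_real (al1 / al2)"
      using d1 unfolding xf0 rsq by simp
    have e2: "(1 - lam)\<^sup>2 * ((\<lambda>p. (1 + r\<^sup>2 + lam\<^sup>2 * (yf p)\<^sup>2) / (1 - lam)\<^sup>2) (0, 0)) = 1 + complex_of_real (al1 / al2)"
      using d2 unfolding xf0 rsq by simp
    show ?case unfolding hF
      using tendsto_mult_left[OF elim(1), of "(1 + lam)\<^sup>2"] tendsto_mult_left[OF elim(2), of "(1 - lam)\<^sup>2"]
      unfolding e1 e2 by simp
  qed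
  have part4: "AE \<omega> in M.
            (\<lambda>j. complex_of_real (1 - al1 * al2) * cplx_cond_exp M (F j) (\<lambda>\<omega>. ex j \<omega> * ey j \<omega>) \<omega>)
               \<longlonglongrightarrow> 1 - complex_of_real (al1 / al2)"
    using L3
  proof eventually_elim
    case (elim \<omega>)
    have c: "complex_of_real (1 - al1 * al2) = (1 + lam) * (1 - lam)"
      using lsq by (simp add: algebra_simps power2_eq_square)
    have e3: "complex_of_real (1 - al1 * al2) * ((\<lambda>p. (1 - r\<^sup>2 - lam\<^sup>2 * xf p * yf p) / ((1 + lam) * (1 - lam))) (0, 0))
       = 1 - complex_of_real (al1 / al2)"
      using d1 d2 unfolding c xf0 rsq by simp
    show ?case unfolding hF
      using tendsto_mult_left[OF elim, of "complex_of_real (1 - al1 * al2)"] unfolding e3 .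
  qed
  show ?thesis using part1 part2 part3 part4 by blast
qed

end
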